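(* Let $P$ be a finite partial IP loop with $3\mid o_3(P)$. Then there exists a finite partial IP loop $Q\ge P$ satisfying all of: $3\mid o_3(Q)$, $\#Q\ge 10$, $\#Q\equiv 4\pmod 6$, and $\Gamma(Q)\subseteq O_2(Q)\times O_2(Q)$.
   Context: A partial IP loop is a set $P$ with a partial binary operation $(x,y)\mapsto xy$ defined on a subset $D(P)\subseteq P\times P$ (the domain) such that: (1) there is $1\in P$ with $(1,x),(x,1)\in D(P)$ and $1x=x1=x$ for all $x\in P$; (2) for each $x\in P$ there is a unique $y\in P$, denoted $x^{-1}$, with $(x,y),(y,x)\in D(P)$ and $xy=yx=1$; (3) whenever $(x,y)\in D(P)$, we have $(x^{-1},xy),(xy,y^{-1})\in D(P)$ and $x^{-1}(xy)=y$, $(xy)y^{-1}=x$. A partial IP loop $(Q,* )$ extends $(P,\cdot)$ (written $P\le Q$) if $P\subseteq Q$, $D(P)\subseteq D(Q)$ and $x\cdot y=x*y$ for all $(x,y)\in D(P)$. The set of gaps is $\Gamma(P)=(P\times P)\setminus D(P)$. $O_2(P)=\{x\in P: (x,x)\in D(P),\ x\ne 1,\ xx=1\}$; $O_3(P)=\{x\in P: (x,x)\in D(P),\ (x,xx)\in D(P),\ x\neq 1,\ x(xx)=1\}$ and $o_3(P)=\#O_3(P)$. *)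

theory Defs
  imports Main
begin

text \<open>A partial binary operation on a carrier P is modelled as mul :: 'a => 'a => 'a option;
  the domain D(P) is the set of pairs in P x P where mul is defined (Some).\<close>

definition pdom :: "'a set \<Rightarrow> ('a \<Rightarrow> 'a \<Rightarrow> 'a option) \<Rightarrow> ('a \<times> 'a) set" where
  "pdom P mul = {(x, y). x \<in> P \<and> y \<in> P \<and> mul x y \<noteq> None}"

definition pinv :: "'a set \<Rightarrow> ('a \<Rightarrow> 'a \<Rightarrow> 'a option) \<Rightarrow> 'a \<Rightarrow> 'a \<Rightarrow> 'a" where
  "pinv P mul e x = (THE y. y \<in> P \<and> mul x y = Some e \<and> mul y x = Some e)"

definition partial_ip_loop :: "'a set \<Rightarrow> ('a \<Rightarrow> 'a \<Rightarrow> 'a option) \<Rightarrow> 'a \<Rightarrow> bool" where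
  "partial_ip_loop P mul e \<longleftrightarrow>
     (\<forall>x\<in>P. \<forall>y\<in>P. \<forall>z. mul x y = Some z \<longrightarrow> z \<in> P) \<and>
     e \<in> P \<and>
     (\<forall>x\<in>P. mul e x = Some x \<and> mul x e = Some x) \<and>
     (\<forall>x\<in>P. \<exists>!y. y \<in> P \<and> mul x y = Some e \<and> mul y x = Some e) \<and>
     (\<forall>x\<in>P. \<forall>y\<in>P. \<forall>z. mul x y = Some z \<longrightarrow>
          mul (pinv P mul e x) z = Some y \<and> mul z (pinv P mul e y) = Some x)"

definition gaps :: "'a set \<Rightarrow> ('a \<Rightarrow> 'a \<Rightarrow> 'a option) \<Rightarrow> ('a \<times> 'a) set" where
  "gaps P mul = (P \<times> P) - pdom P mul"

definition O2 :: "'a set \<Rightarrow> ('a \<Rightarrow> 'a \<Rightarrow> 'a option) \<Rightarrow> 'a \<Rightarrow> 'a set" where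
  "O2 P mul e = {x \<in> P. x \<noteq> e \<and> mul x x = Some e}"

definition O3 :: "'a set \<Rightarrow> ('a \<Rightarrow> 'a \<Rightarrow> 'a option) \<Rightarrow> 'a \<Rightarrow> 'a set" where
  "O3 P mul e = {x \<in> P. x \<noteq> e \<and> (\<exists>z. mul x x = Some z \<and> mul x z = Some e)}"

definition o3 :: "'a set \<Rightarrow> ('a \<Rightarrow> 'a \<Rightarrow> 'a option) \<Rightarrow> 'a \<Rightarrow> nat" where
  "o3 P mul e = card (O3 P mul e)"

text \<open>Extension P <= Q along an injective relabelling f (to allow Q to live in a larger type).\<close>
definition extends_along :: "('a \<Rightarrow> 'b) \<Rightarrow> 'a set \<Rightarrow> ('a \<Rightarrow> 'a \<Rightarrow> 'a option) \<Rightarrow>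
    'b set \<Rightarrow> ('b \<Rightarrow> 'b \<Rightarrow> 'b option) \<Rightarrow> bool" where
  "extends_along f P mul Q mulQ \<longleftrightarrow> inj_on f P \<and> f ` P \<subseteq> Q \<and>
     (\<forall>x\<in>P. \<forall>y\<in>P. \<forall>z. mul x y = Some z \<longrightarrow> mulQ (f x) (f y) = Some (f z))"

end

theory Submission
  imports Defs
begin
lemma pil_intro:
  assumes e: "e \<in> Q"
  and iQ: "\<forall>x\<in>Q. \<iota> x \<in> Q"
  and cl: "\<forall>x\<in>Q. \<forall>y\<in>Q. \<forall>z. m x y = Some z \<longrightarrow> z \<in> Q"
  and unit: "\<forall>x\<in>Q. m e x = Some x \<and> m x e = Some x"
  and inv: "\<forall>x\<in>Q. m x (\<iota> x) = Some e \<and> m (\<iota> x) x = Some e"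
  and ip: "\<forall>x\<in>Q. \<forall>y\<in>Q. \<forall>z. m x y = Some z \<longrightarrow> m (\<iota> x) z = Some y \<and> m z (\<iota> y) = Some x"
  shows "partial_ip_loop Q m e \<and> (\<forall>x\<in>Q. pinv Q m e x = \<iota> x)"
proof -
  have uq: "y = \<iota> x" if "x \<in> Q" "y \<in> Q" "m x y = Some e" for x y
  proof -
    have "m (\<iota> x) e = Some y" using ip[rule_format, OF that(1) that(2) that(3)] by (rule conjunct1)
    moreover have "m (\<iota> x) e = Some (\<iota> x)" using unit iQ that(1) by simp
    ultimately show ?thesis by simp
  qed
  have ex1: "\<exists>!y. y \<in> Q \<and> m x y = Some e \<and> m y x = Some e" if x: "x \<in> Q" for x
  proof (rule ex1I[where a="\<iota> x"])
    show "\<iota> x \<in> Q \<and> m x (\<iota> x) = Some e \<and> m (\<iota> x) x = Some e" using inv iQ x by simp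
    show "y = \<iota> x" if "y \<in> Q \<and> m x y = Some e \<and> m y x = Some e" for y
      using uq[of x y] that x by simp
  qed
  have pv: "pinv Q m e x = \<iota> x" if x: "x \<in> Q" for x
    unfolding pinv_def
  proof (rule the_equality)
    show "\<iota> x \<in> Q \<and> m x (\<iota> x) = Some e \<and> m (\<iota> x) x = Some e" using inv iQ x by simp
    show "y = \<iota> x" if "y \<in> Q \<and> m x y = Some e \<and> m y x = Some e" for y
      using uq[of x y] that x by simp
  qed
  have ip2: "\<forall>x\<in>Q. \<forall>y\<in>Q. \<forall>z. m x y = Some z \<longrightarrow>
          m (pinv Q m e x) z = Some y \<and> m z (pinv Q m e y) = Some x"
  proof (intro ballI allI impI)
    fix x y z assume xy: "x \<in> Q" "y \<in> Q" "m x y = Some z"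
    show "m (pinv Q m e x) z = Some y \<and> m z (pinv Q m e y) = Some x"
      using ip[rule_format, OF xy] pv[OF xy(1)] pv[OF xy(2)] by simp
  qed
  have "partial_ip_loop Q m e" unfolding partial_ip_loop_def
    apply (intro conjI)
        apply (rule cl)
       apply (rule e)
      apply (rule unit)
     apply (intro ballI, erule ex1)
    apply (rule ip2)
    done
  then show ?thesis using pv by blast
qed
lemma pil_props:
  assumes "partial_ip_loop Q m e"
  defines "\<iota> \<equiv> pinv Q m e"
  shows "e \<in> Q" "\<forall>x\<in>Q. \<iota> x \<in> Q"
    "\<forall>x\<in>Q. \<forall>y\<in>Q. \<forall>z. m x y = Some z \<longrightarrow> z \<in> Q"
    "\<forall>x\<in>Q. m e x = Some x \<and> m x e = Some x"
    "\<forall>x\<in>Q. m x (\<iota> x) = Some e \<and> m (\<iota> x) x = Some e"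
    "\<forall>x\<in>Q. \<forall>y\<in>Q. \<forall>z. m x y = Some z \<longrightarrow> m (\<iota> x) z = Some y \<and> m z (\<iota> y) = Some x"
    "\<forall>x\<in>Q. \<iota> (\<iota> x) = x"
    "\<iota> e = e"
    "\<forall>x\<in>Q. \<forall>y\<in>Q. m x y = Some e \<longrightarrow> y = \<iota> x"
proof -
  have A: "(\<forall>x\<in>Q. \<forall>y\<in>Q. \<forall>z. m x y = Some z \<longrightarrow> z \<in> Q) \<and>
     e \<in> Q \<and>
     (\<forall>x\<in>Q. m e x = Some x \<and> m x e = Some x) \<and>
     (\<forall>x\<in>Q. \<exists>!y. y \<in> Q \<and> m x y = Some e \<and> m y x = Some e) \<and>
     (\<forall>x\<in>Q. \<forall>y\<in>Q. \<forall>z. m x y = Some z \<longrightarrow>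
          m (pinv Q m e x) z = Some y \<and> m z (pinv Q m e y) = Some x)"
      using assms(1) unfolding partial_ip_loop_def by assumption
  note A1 = A[THEN conjunct1] and A2 = A[THEN conjunct2, THEN conjunct1]
   and A3 = A[THEN conjunct2, THEN conjunct2, THEN conjunct1]
   and A4 = A[THEN conjunct2, THEN conjunct2, THEN conjunct2, THEN conjunct1]
   and A5 = A[THEN conjunct2, THEN conjunct2, THEN conjunct2, THEN conjunct2]
  have inv: "\<iota> x \<in> Q \<and> m x (\<iota> x) = Some e \<and> m (\<iota> x) x = Some e" if "x \<in> Q" for x
  proof -
    from A4 that have "\<exists>!y. y \<in> Q \<and> m x y = Some e \<and> m y x = Some e" by (rule bspec)
    then show ?thesis unfolding \<iota>_def pinv_def by (rule theI')
  qed
  have uq: "y = \<iota> x" if "x \<in> Q" "y \<in> Q" "m x y = Some e" "m y x = Some e" for x y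
  proof -
    from A4 that(1) have u: "\<exists>!y. y \<in> Q \<and> m x y = Some e \<and> m y x = Some e" by (rule bspec)
    show ?thesis using u inv[OF that(1)] that(2-4) by blast
  qed
  show e: "e \<in> Q" using A2 .
  show "\<forall>x\<in>Q. \<iota> x \<in> Q" using inv by blast
  show "\<forall>x\<in>Q. \<forall>y\<in>Q. \<forall>z. m x y = Some z \<longrightarrow> z \<in> Q" using A1 .
  show "\<forall>x\<in>Q. m e x = Some x \<and> m x e = Some x" using A3 .
  show "\<forall>x\<in>Q. m x (\<iota> x) = Some e \<and> m (\<iota> x) x = Some e" using inv by blast
  show ip: "\<forall>x\<in>Q. \<forall>y\<in>Q. \<forall>z. m x y = Some z \<longrightarrow> m (\<iota> x) z = Some y \<and> m z (\<iota> y) = Some x"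
    using A5 unfolding \<iota>_def .
  show "\<forall>x\<in>Q. \<iota> (\<iota> x) = x"
  proof
    fix x assume x: "x \<in> Q"
    have "x = \<iota> (\<iota> x)" using inv[OF x] x by (intro uq) auto
    then show "\<iota> (\<iota> x) = x" by simp
  qed
  have "e \<in> Q \<and> m e e = Some e" using A3 e by blast
  then show "\<iota> e = e" using uq[OF e e] by simp
  show "\<forall>x\<in>Q. \<forall>y\<in>Q. m x y = Some e \<longrightarrow> y = \<iota> x"
  proof (intro ballI impI)
    fix x y assume xy: "x \<in> Q" "y \<in> Q" "m x y = Some e"
    have "m (\<iota> x) e = Some y" using ip[rule_format, OF xy] by (rule conjunct1)
    moreover have "m (\<iota> x) e = Some (\<iota> x)" using A3 inv[OF xy(1)] by blast
    ultimately show "y = \<iota> x" by simp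
  qed
qed

lemma pil_dom_sym:
  assumes "partial_ip_loop Q m e" "x \<in> Q" "y \<in> Q" "m x y \<noteq> None"
  shows "m (pinv Q m e y) (pinv Q m e x) \<noteq> None"
proof -
  note P = pil_props[OF assms(1)]
  obtain z where z: "m x y = Some z" using assms by auto
  have zQ: "z \<in> Q" using P(3) assms z by blast
  have 1: "m (pinv Q m e x) z = Some y" using P(6)[rule_format, OF assms(2,3) z] by (rule conjunct1)
  have ixQ: "pinv Q m e x \<in> Q" using P(2) assms(2) by blast
  have 2: "m y (pinv Q m e z) = Some (pinv Q m e x)" using P(6)[rule_format, OF ixQ zQ 1] by (rule conjunct2)
  have izQ: "pinv Q m e z \<in> Q" using P(2) zQ by blast
  have 3: "m (pinv Q m e y) (pinv Q m e x) = Some (pinv Q m e z)"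
    using P(6)[rule_format, OF assms(3) izQ 2] by (rule conjunct1)
  then show ?thesis by simp
qed


definition orb :: "('b \<Rightarrow> 'b) \<Rightarrow> 'b \<Rightarrow> 'b \<Rightarrow> 'b \<Rightarrow> ('b \<times> 'b \<times> 'b) set" where
  "orb \<iota> x y z = {(x,y,z),(\<iota> x,z,y),(z,\<iota> y,x),(\<iota> z,x,\<iota> y),(y,\<iota> z,\<iota> x),(\<iota> y,\<iota> x,\<iota> z)}"

lemma orb_cl:
  assumes "\<iota> (\<iota> x) = x" "\<iota> (\<iota> y) = y" "\<iota> (\<iota> z) = z" "(p,q,r) \<in> orb \<iota> x y z"
  shows "(\<iota> p, r, q) \<in> orb \<iota> x y z \<and> (r, \<iota> q, p) \<in> orb \<iota> x y z"
  using assms unfolding orb_def by auto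

definition ext :: "'b set \<Rightarrow> ('b \<Rightarrow> 'b \<Rightarrow> 'b option) \<Rightarrow> ('b \<times> 'b \<times> 'b) set \<Rightarrow> 'b \<Rightarrow> 'b \<Rightarrow> 'b option" where
  "ext S m T x y = (if \<exists>z. (x,y,z) \<in> T then Some (THE z. (x,y,z) \<in> T)
      else if x \<in> S \<and> y \<in> S then m x y else None)"

lemma ext_T:
  assumes "\<forall>x y z z'. (x,y,z)\<in>T \<longrightarrow> (x,y,z')\<in>T \<longrightarrow> z = z'" "(x,y,z) \<in> T"
  shows "ext S m T x y = Some z"
proof -
  have "(THE z. (x,y,z) \<in> T) = z" using assms by (intro the_equality) blast+
  then show ?thesis using assms(2) unfolding ext_def by auto
qed

lemma ext_old:
  assumes "\<not> (\<exists>z. (x,y,z) \<in> T)" "x \<in> S" "y \<in> S"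
  shows "ext S m T x y = m x y"
  using assms unfolding ext_def by auto

lemma ext_cases:
  assumes "ext S m T x y = Some z"
  shows "(\<exists>z'. (x,y,z') \<in> T) \<or> (x \<in> S \<and> y \<in> S \<and> m x y = Some z \<and> \<not> (\<exists>z'. (x,y,z') \<in> T))"
  using assms unfolding ext_def by (auto split: if_splits)

lemma ext_pil:
  assumes pil: "partial_ip_loop S m e" and SS': "S \<subseteq> S'"
  and i1: "\<forall>x\<in>S. \<iota>' x = pinv S m e x"
  and i2: "\<forall>x\<in>S'. \<iota>' x \<in> S'" and i3: "\<forall>x\<in>S'. \<iota>' (\<iota>' x) = x"
  and Tsub: "\<forall>x y z. (x,y,z)\<in>T \<longrightarrow> x\<in>S' \<and> y \<in> S' \<and> z \<in> S'"
  and Tcl: "\<forall>x y z. (x,y,z)\<in>T \<longrightarrow> (\<iota>' x, z, y) \<in> T \<and> (z, \<iota>' y, x) \<in> T"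
  and Tfun: "\<forall>x y z z'. (x,y,z)\<in>T \<longrightarrow> (x,y,z')\<in>T \<longrightarrow> z = z'"
  and Tdisj: "\<forall>x y z. (x,y,z)\<in>T \<longrightarrow> x\<in>S \<longrightarrow> y\<in>S \<longrightarrow> m x y = None"
  and Tunit: "\<forall>u\<in>S'-S. (e,u,u) \<in> T"
  shows "partial_ip_loop S' (ext S m T) e \<and> (\<forall>x\<in>S'. pinv S' (ext S m T) e x = \<iota>' x)
     \<and> (\<forall>x\<in>S. \<forall>y\<in>S. m x y \<noteq> None \<longrightarrow> ext S m T x y = m x y)"
proof -
  note P = pil_props[OF pil]
  have eS: "e \<in> S" using P(1) .
  have ie: "\<iota>' e = e" using i1 eS P(8) by simp
  have noT: "\<not> (\<exists>z'. (x,y,z') \<in> T)" if "x \<in> S" "y \<in> S" "m x y \<noteq> None" for x y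
    using Tdisj that by metis
  have old: "ext S m T x y = m x y" if "x \<in> S" "y \<in> S" "m x y \<noteq> None" for x y
    using ext_old[OF noT[OF that] that(1,2)] .
  have newinv: "\<iota>' u \<in> S' - S" if "u \<in> S' - S" for u
  proof -
    have "\<iota>' u \<in> S'" using i2 that by blast
    moreover have "\<iota>' u \<notin> S"
    proof
      assume "\<iota>' u \<in> S"
      then have "\<iota>' (\<iota>' u) \<in> S" using i1 P(2) by simp
      then show False using i3 that by simp
    qed
    ultimately show ?thesis by simp
  qed
  have unitT: "(e,u,u) \<in> T \<and> (u,e,u) \<in> T \<and> (u,\<iota>' u, e) \<in> T \<and> (\<iota>' u, u, e) \<in> T" if "u \<in> S' - S" for u
  proof -
    have 1: "(e,u,u) \<in> T" using Tunit that by blast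
    have 2: "(e,\<iota>' u,\<iota>' u) \<in> T" using Tunit newinv[OF that] by blast
    have 3: "(u, \<iota>' u, e) \<in> T" using Tcl 1 by blast
    have 4: "(\<iota>' u, \<iota>' (\<iota>' u), e) \<in> T" using Tcl 2 by blast
    then have 4: "(\<iota>' u, u, e) \<in> T" using i3 that by simp
    have 5: "(\<iota>' (\<iota>' u), e, u) \<in> T" using Tcl 4 by blast
    then have 5: "(u, e, u) \<in> T" using i3 that by simp
    show ?thesis using 1 3 4 5 by blast
  qed
  have main: "partial_ip_loop S' (ext S m T) e \<and> (\<forall>x\<in>S'. pinv S' (ext S m T) e x = \<iota>' x)"
  proof (rule pil_intro)
    show "e \<in> S'" using eS SS' by blast
    show "\<forall>x\<in>S'. \<iota>' x \<in> S'" using i2 .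
    show "\<forall>x\<in>S'. \<forall>y\<in>S'. \<forall>z. ext S m T x y = Some z \<longrightarrow> z \<in> S'"
    proof (intro ballI allI impI)
      fix x y z assume xy: "x \<in> S'" "y \<in> S'" "ext S m T x y = Some z"
      from ext_cases[OF xy(3)] show "z \<in> S'"
      proof
        assume "\<exists>z'. (x,y,z') \<in> T"
        then obtain z' where z': "(x,y,z') \<in> T" by blast
        then have "ext S m T x y = Some z'" using ext_T[OF Tfun] by blast
        then show ?thesis using xy z' Tsub by auto
      next
        assume "x \<in> S \<and> y \<in> S \<and> m x y = Some z \<and> \<not> (\<exists>z'. (x,y,z') \<in> T)"
        then show ?thesis using P(3) SS' by blast
      qed
    qed
    show "\<forall>x\<in>S'. ext S m T e x = Some x \<and> ext S m T x e = Some x"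
    proof
      fix x assume x: "x \<in> S'"
      show "ext S m T e x = Some x \<and> ext S m T x e = Some x"
      proof (cases "x \<in> S")
        case True
        have "m e x = Some x" "m x e = Some x" using P(4) True by blast+
        then show ?thesis using old[OF eS True] old[OF True eS] by simp
      next
        case False
        then show ?thesis using unitT[of x] x ext_T[OF Tfun] by blast
      qed
    qed
    show "\<forall>x\<in>S'. ext S m T x (\<iota>' x) = Some e \<and> ext S m T (\<iota>' x) x = Some e"
    proof
      fix x assume x: "x \<in> S'"
      show "ext S m T x (\<iota>' x) = Some e \<and> ext S m T (\<iota>' x) x = Some e"
      proof (cases "x \<in> S")
        case True
        have ix: "\<iota>' x = pinv S m e x" "pinv S m e x \<in> S" using i1 P(2) True by blast+
        have "m x (pinv S m e x) = Some e" "m (pinv S m e x) x = Some e" using P(5) True by blast+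
        then show ?thesis using old[OF True ix(2)] old[OF ix(2) True] ix(1) by simp
      next
        case False
        then show ?thesis using unitT[of x] x ext_T[OF Tfun] by blast
      qed
    qed
    show "\<forall>x\<in>S'. \<forall>y\<in>S'. \<forall>z. ext S m T x y = Some z \<longrightarrow>
        ext S m T (\<iota>' x) z = Some y \<and> ext S m T z (\<iota>' y) = Some x"
    proof (intro ballI allI impI)
      fix x y z assume xy: "x \<in> S'" "y \<in> S'" "ext S m T x y = Some z"
      from ext_cases[OF xy(3)] show "ext S m T (\<iota>' x) z = Some y \<and> ext S m T z (\<iota>' y) = Some x"
      proof
        assume "\<exists>z'. (x,y,z') \<in> T"
        then obtain z' where z': "(x,y,z') \<in> T" by blast
        then have "ext S m T x y = Some z'" using ext_T[OF Tfun] by blast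
        then have zz: "z' = z" using xy by simp
        have "(\<iota>' x, z, y) \<in> T" "(z, \<iota>' y, x) \<in> T" using Tcl z' zz by blast+
        then show ?thesis using ext_T[OF Tfun] by blast
      next
        assume H: "x \<in> S \<and> y \<in> S \<and> m x y = Some z \<and> \<not> (\<exists>z'. (x,y,z') \<in> T)"
        have zS: "z \<in> S" using P(3) H by blast
        have ixS: "pinv S m e x \<in> S" "pinv S m e y \<in> S" using P(2) H by blast+
        have r: "m (pinv S m e x) z = Some y" "m z (pinv S m e y) = Some x"
          using P(6)[rule_format, of x y z] H by blast+
        have "ext S m T (pinv S m e x) z = Some y" using old[OF ixS(1) zS] r(1) by simp
        moreover have "ext S m T z (pinv S m e y) = Some x" using old[OF zS ixS(2)] r(2) by simp
        ultimately show ?thesis using i1 H by simp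
      qed
    qed
  qed
  show ?thesis using main old by blast
qed


lemma o3_ext:
  assumes pil: "partial_ip_loop S m e" and pil': "partial_ip_loop S' m' e" and SS': "S \<subseteq> S'"
  and agree: "\<forall>x\<in>S. \<forall>y\<in>S. m x y \<noteq> None \<longrightarrow> m' x y = m x y"
  and new: "\<forall>x\<in>S'-S. m' x x = Some e"
  and sq: "\<forall>x\<in>S. m x x = None \<longrightarrow> m' x x \<noteq> Some (pinv S m e x)"
  shows "O3 S' m' e = O3 S m e"
proof -
  note P = pil_props[OF pil] and P' = pil_props[OF pil']
  have pv: "pinv S' m' e x = pinv S m e x" if x: "x \<in> S" for x
  proof -
    have "m x (pinv S m e x) = Some e" using P(5) x by blast
    moreover have "pinv S m e x \<in> S" using P(2) x by blast
    ultimately have h: "m' x (pinv S m e x) = Some e" using agree x by simp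
    have "x \<in> S'" "pinv S m e x \<in> S'" using x SS' \<open>pinv S m e x \<in> S\<close> by auto
    then show ?thesis using P'(9)[rule_format, OF _ _ h] by simp
  qed
  show ?thesis
  proof
    show "O3 S' m' e \<subseteq> O3 S m e"
    proof
      fix x assume "x \<in> O3 S' m' e"
      then obtain z where x: "x \<in> S'" "x \<noteq> e" "m' x x = Some z" "m' x z = Some e"
        unfolding O3_def by blast
      have zS': "z \<in> S'" using P'(3) x by blast
      have z: "z = pinv S' m' e x" using P'(9) x zS' by blast
      show "x \<in> O3 S m e"
      proof (cases "x \<in> S")
        case False
        then have "z = e" using new x by simp
        then have "m' x e = Some e" using x by simp
        moreover have "m' x e = Some x" using P'(4) x by blast
        ultimately show ?thesis using x by simp
      next
        case True
        have z2: "z = pinv S m e x" using z pv True by simp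
        have zS: "z \<in> S" using z2 P(2) True by blast
        have "m x x \<noteq> None" using sq True x z2 by blast
        then have mxx: "m x x = Some z" using agree True x by simp
        have "m x z = Some e" using P(5) True z2 by blast
        then show ?thesis unfolding O3_def using True x mxx by blast
      qed
    qed
    show "O3 S m e \<subseteq> O3 S' m' e"
    proof
      fix x assume "x \<in> O3 S m e"
      then obtain z where x: "x \<in> S" "x \<noteq> e" "m x x = Some z" "m x z = Some e"
        unfolding O3_def by blast
      have zS: "z \<in> S" using P(3) x by blast
      have "m' x x = Some z" "m' x z = Some e" using agree x zS by simp_all
      then show "x \<in> O3 S' m' e" unfolding O3_def using x SS' by blast
    qed
  qed
qed

lemma fill_one:
  assumes pil: "partial_ip_loop S m e" and ab: "a \<in> S" "b \<in> S" "m a b = None" and c: "c \<notin> S"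
  defines "\<iota>' \<equiv> (\<lambda>x. if x = c then c else pinv S m e x)"
  defines "T \<equiv> orb \<iota>' a b c \<union> orb \<iota>' e c c"
  shows "partial_ip_loop (insert c S) (ext S m T) e"
    "\<forall>x\<in>S. \<forall>y\<in>S. m x y \<noteq> None \<longrightarrow> ext S m T x y = m x y"
    "ext S m T a b \<noteq> None"
    "ext S m T c c = Some e"
    "\<forall>x\<in>S. \<forall>y\<in>S. m x y = None \<longrightarrow> ext S m T x y = None \<or> ext S m T x y = Some c"
proof -
  note P = pil_props[OF pil]
  have eS: "e \<in> S" using P(1) .
  have ia: "\<iota>' a = pinv S m e a" "\<iota>' b = pinv S m e b" "\<iota>' c = c" "\<iota>' e = e"
    using ab c eS P(8) unfolding \<iota>'_def by auto
  have iaS: "pinv S m e a \<in> S" "pinv S m e b \<in> S" using P(2) ab by blast+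
  have iia: "\<iota>' (\<iota>' a) = a" "\<iota>' (\<iota>' b) = b" using ia iaS P(7) ab c unfolding \<iota>'_def by auto
  have ane: "a \<noteq> e" "b \<noteq> e" using ab P(4) by auto
  have bia: "b \<noteq> pinv S m e a" using ab P(5) by auto
  have abi: "a \<noteq> pinv S m e b" using bia P(7) ab by auto
  have ine: "pinv S m e a \<noteq> e" "pinv S m e b \<noteq> e" using ane P(7) P(8) ab by metis+
  have ab2: "m (pinv S m e b) (pinv S m e a) = None"
  proof (rule ccontr)
    assume "m (pinv S m e b) (pinv S m e a) \<noteq> None"
    then have "m (pinv S m e (pinv S m e a)) (pinv S m e (pinv S m e b)) \<noteq> None"
      using pil_dom_sym[OF pil] iaS by blast
    then show False using P(7) ab by simp
  qed
  have cne: "c \<noteq> e" "c \<noteq> a" "c \<noteq> b" "c \<noteq> pinv S m e a" "c \<noteq> pinv S m e b"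
    using c eS ab iaS by auto
  have Tfun: "\<forall>x y z z'. (x,y,z)\<in>T \<longrightarrow> (x,y,z')\<in>T \<longrightarrow> z = z'"
    unfolding T_def orb_def ia using cne ane bia abi ine
    by auto
  have Tcl: "\<forall>x y z. (x,y,z)\<in>T \<longrightarrow> (\<iota>' x, z, y) \<in> T \<and> (z, \<iota>' y, x) \<in> T"
  proof (intro allI impI)
    fix x y z assume "(x,y,z) \<in> T"
    then show "(\<iota>' x, z, y) \<in> T \<and> (z, \<iota>' y, x) \<in> T"
      unfolding T_def using orb_cl[of \<iota>' a b c x y z] orb_cl[of \<iota>' e c c x y z] ia iia by auto
  qed
  have Tsub: "\<forall>x y z. (x,y,z)\<in>T \<longrightarrow> x\<in>insert c S \<and> y \<in> insert c S \<and> z \<in> insert c S"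
    unfolding T_def orb_def using ia iaS ab eS by auto
  have Tdisj: "\<forall>x y z. (x,y,z)\<in>T \<longrightarrow> x\<in>S \<longrightarrow> y\<in>S \<longrightarrow> m x y = None"
    unfolding T_def orb_def using ia ab ab2 c by auto
  have Tunit: "\<forall>u\<in>insert c S - S. (e,u,u) \<in> T"
    unfolding T_def orb_def using c by auto
  have i1: "\<forall>x\<in>S. \<iota>' x = pinv S m e x" unfolding \<iota>'_def using c by auto
  have i2: "\<forall>x\<in>insert c S. \<iota>' x \<in> insert c S" unfolding \<iota>'_def using P(2) by auto
  have i3: "\<forall>x\<in>insert c S. \<iota>' (\<iota>' x) = x" unfolding \<iota>'_def using P(2) P(7) c by auto
  note E = ext_pil[OF pil _ i1 i2 i3 Tsub Tcl Tfun Tdisj Tunit]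
  show "partial_ip_loop (insert c S) (ext S m T) e" using E by blast
  show "\<forall>x\<in>S. \<forall>y\<in>S. m x y \<noteq> None \<longrightarrow> ext S m T x y = m x y" using E by blast
  have "(a,b,c) \<in> T" unfolding T_def orb_def by auto
  then show "ext S m T a b \<noteq> None" using ext_T[OF Tfun] by simp
  have "(c,c,e) \<in> T" unfolding T_def orb_def using ia by auto
  then show "ext S m T c c = Some e" using ext_T[OF Tfun] by simp
  show "\<forall>x\<in>S. \<forall>y\<in>S. m x y = None \<longrightarrow> ext S m T x y = None \<or> ext S m T x y = Some c"
  proof (intro ballI impI)
    fix x y assume xy: "x \<in> S" "y \<in> S" "m x y = None"
    show "ext S m T x y = None \<or> ext S m T x y = Some c"
    proof (cases "\<exists>z. (x,y,z) \<in> T")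
      case True
      then obtain z where z: "(x,y,z) \<in> T" by blast
      then have "z = c" using xy c unfolding T_def orb_def using ia by auto
      then show ?thesis using ext_T[OF Tfun z] by simp
    next
      case False
      then show ?thesis using ext_old[OF False xy(1,2)] xy by simp
    qed
  qed
qed


lemma stage1:
  assumes inf: "infinite (UNIV :: 'b set)"
  shows "partial_ip_loop (S::'b set) m e \<Longrightarrow> finite S \<Longrightarrow> A \<subseteq> S \<Longrightarrow> (\<forall>x\<in>S-A. x \<noteq> e \<and> m x x = Some e) \<Longrightarrow>
   \<exists>S' m'. partial_ip_loop S' m' e \<and> finite S' \<and> S \<subseteq> S' \<and>
     (\<forall>x\<in>S. \<forall>y\<in>S. m x y \<noteq> None \<longrightarrow> m' x y = m x y) \<and>
     (\<forall>x\<in>S'-A. x \<noteq> e \<and> m' x x = Some e) \<and> (\<forall>x\<in>A. \<forall>y\<in>A. m' x y \<noteq> None) \<and>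
     O3 S' m' e = O3 S m e"
proof (induction "card {p \<in> A \<times> A. m (fst p) (snd p) = None}" arbitrary: S m rule: less_induct)
  case less
  note pil = less.prems(1) and fin = less.prems(2) and AS = less.prems(3) and inv = less.prems(4)
  show ?case
  proof (cases "{p \<in> A \<times> A. m (fst p) (snd p) = None} = {}")
    case True
    then have "\<forall>x\<in>A. \<forall>y\<in>A. m x y \<noteq> None" by auto
    then show ?thesis
      apply (intro exI[of _ S] exI[of _ m] conjI)
      using pil fin inv by simp_all
  next
    case False
    then obtain a b where ab: "a \<in> A" "b \<in> A" "m a b = None" by auto
    obtain c where c: "c \<notin> S" using ex_new_if_finite[OF inf fin] by blast
    define \<iota>' where "\<iota>' \<equiv> (\<lambda>x. if x = c then c else pinv S m e x)"
    define T where "T \<equiv> orb \<iota>' a b c \<union> orb \<iota>' e c c"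
    define m1 where "m1 = ext S m T"
    have abS: "a \<in> S" "b \<in> S" using ab AS by auto
    note F = fill_one[OF pil abS ab(3) c, folded \<iota>'_def, folded T_def, folded m1_def]
    have pil1: "partial_ip_loop (insert c S) m1 e" using F(1) .
    have fin1: "finite (insert c S)" using fin by simp
    have AS1: "A \<subseteq> insert c S" using AS by auto
    have inv1: "\<forall>x\<in>insert c S - A. x \<noteq> e \<and> m1 x x = Some e"
    proof
      fix x assume x: "x \<in> insert c S - A"
      show "x \<noteq> e \<and> m1 x x = Some e"
      proof (cases "x = c")
        case True
        then show ?thesis using F(4) c pil_props(1)[OF pil] by auto
      next
        case False
        then have "x \<in> S - A" using x by simp
        then show ?thesis using inv F(2) by simp
      qed
    qed
    have sub: "{p \<in> A \<times> A. m1 (fst p) (snd p) = None} \<subset> {p \<in> A \<times> A. m (fst p) (snd p) = None}"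
    proof
      show "{p \<in> A \<times> A. m1 (fst p) (snd p) = None} \<subseteq> {p \<in> A \<times> A. m (fst p) (snd p) = None}"
      proof
        fix p assume "p \<in> {p \<in> A \<times> A. m1 (fst p) (snd p) = None}"
        then obtain x y where p: "p = (x,y)" "x \<in> A" "y \<in> A" "m1 x y = None" by auto
        have "x \<in> S" "y \<in> S" using p AS by auto
        then have "m x y = None" using F(2) p(4) by (metis option.distinct(1))
        then show "p \<in> {p \<in> A \<times> A. m (fst p) (snd p) = None}" using p by simp
      qed
      have "(a,b) \<notin> {p \<in> A \<times> A. m1 (fst p) (snd p) = None}" using F(3) by simp
      moreover have "(a,b) \<in> {p \<in> A \<times> A. m (fst p) (snd p) = None}" using ab by simp
      ultimately show "{p \<in> A \<times> A. m1 (fst p) (snd p) = None} \<noteq> {p \<in> A \<times> A. m (fst p) (snd p) = None}"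
        by blast
    qed
    have finA: "finite (A \<times> A)" using fin AS finite_subset by blast
    have lt: "card {p \<in> A \<times> A. m1 (fst p) (snd p) = None} < card {p \<in> A \<times> A. m (fst p) (snd p) = None}"
      using psubset_card_mono[OF _ sub] finA by auto
    have ex: "\<exists>S' m'. partial_ip_loop S' m' e \<and> finite S' \<and> insert c S \<subseteq> S' \<and>
     (\<forall>x\<in>insert c S. \<forall>y\<in>insert c S. m1 x y \<noteq> None \<longrightarrow> m' x y = m1 x y) \<and>
     (\<forall>x\<in>S'-A. x \<noteq> e \<and> m' x x = Some e) \<and> (\<forall>x\<in>A. \<forall>y\<in>A. m' x y \<noteq> None) \<and>
     O3 S' m' e = O3 (insert c S) m1 e"
      by (rule less.hyps[OF lt pil1 fin1 AS1 inv1])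
    then obtain S' m' where IH0: "partial_ip_loop S' m' e \<and> finite S' \<and> insert c S \<subseteq> S' \<and>
     (\<forall>x\<in>insert c S. \<forall>y\<in>insert c S. m1 x y \<noteq> None \<longrightarrow> m' x y = m1 x y) \<and>
     (\<forall>x\<in>S'-A. x \<noteq> e \<and> m' x x = Some e) \<and> (\<forall>x\<in>A. \<forall>y\<in>A. m' x y \<noteq> None) \<and>
     O3 S' m' e = O3 (insert c S) m1 e" by (elim exE)
    note IH = IH0[THEN conjunct1] IH0[THEN conjunct2, THEN conjunct1]
      IH0[THEN conjunct2, THEN conjunct2, THEN conjunct1]
      IH0[THEN conjunct2, THEN conjunct2, THEN conjunct2, THEN conjunct1]
      IH0[THEN conjunct2, THEN conjunct2, THEN conjunct2, THEN conjunct2, THEN conjunct1]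
      IH0[THEN conjunct2, THEN conjunct2, THEN conjunct2, THEN conjunct2, THEN conjunct2, THEN conjunct1]
      IH0[THEN conjunct2, THEN conjunct2, THEN conjunct2, THEN conjunct2, THEN conjunct2, THEN conjunct2]
    have o3: "O3 (insert c S) m1 e = O3 S m e"
    proof (rule o3_ext[OF pil pil1])
      show "S \<subseteq> insert c S" by auto
      show "\<forall>x\<in>S. \<forall>y\<in>S. m x y \<noteq> None \<longrightarrow> m1 x y = m x y" using F(2) .
      show "\<forall>x\<in>insert c S - S. m1 x x = Some e" using F(4) c by auto
      show "\<forall>x\<in>S. m x x = None \<longrightarrow> m1 x x \<noteq> Some (pinv S m e x)"
      proof (intro ballI impI)
        fix x assume x: "x \<in> S" "m x x = None"
        have "pinv S m e x \<in> S" using pil_props(2)[OF pil] x by blast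
        have "m1 x x = None \<or> m1 x x = Some c" using F(5) x by blast
        moreover have "pinv S m e x \<noteq> c" using \<open>pinv S m e x \<in> S\<close> c by blast
        ultimately show "m1 x x \<noteq> Some (pinv S m e x)" by auto
      qed
    qed
    have agree: "\<forall>x\<in>S. \<forall>y\<in>S. m x y \<noteq> None \<longrightarrow> m' x y = m x y"
    proof (intro ballI impI)
      fix x y assume xy: "x \<in> S" "y \<in> S" "m x y \<noteq> None"
      have 1: "m1 x y = m x y" using F(2) xy by blast
      have "m' x y = m1 x y" using IH(4) xy 1 by simp
      then show "m' x y = m x y" using 1 by simp
    qed
    show ?thesis
      apply (rule exI[of _ S'], rule exI[of _ m'])
      using IH(1,2,5,6) IH(3) IH(7) agree o3 by auto
  qed
qed


lemma gen2_fun: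
  assumes GI: "\<And>a b c. (a,b,c) \<in> G \<Longrightarrow> a \<in> I \<and> c \<in> I \<and> b \<in> Np \<and> a \<noteq> c"
  and dis: "\<And>x. x \<in> I \<Longrightarrow> x \<notin> Np \<and> \<iota> x \<notin> Np \<and> x \<noteq> e"
  and dis2: "\<And>y. y \<in> Np \<Longrightarrow> \<iota> y \<notin> Np \<and> y \<noteq> e \<and> \<iota> y \<noteq> e"
  and ii: "\<And>x. \<iota> (\<iota> x) = x"
  and iI: "\<And>x. x \<in> I \<Longrightarrow> \<iota> x = x"
  and ie: "\<iota> e = e"
  and UI: "U \<subseteq> I"
  and Gfun: "\<And>a b c c'. (a,b,c) \<in> G \<Longrightarrow> (a,b,c') \<in> G \<Longrightarrow> c = c'"
  and Ginj: "\<And>a a' b c. (a,b,c) \<in> G \<Longrightarrow> (a',b,c) \<in> G \<Longrightarrow> a = a'"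
  and Gedge: "\<And>a b c a' b' c'. (a,b,c) \<in> G \<Longrightarrow> (a',b',c') \<in> G \<Longrightarrow>
       (a = a' \<and> c = c') \<or> (a = c' \<and> c = a') \<Longrightarrow> a = a' \<and> b = b' \<and> c = c'"
  defines "T \<equiv> (\<Union>g\<in>G. case g of (a,b,c) \<Rightarrow> orb \<iota> a b c) \<union> (\<Union>u\<in>U. orb \<iota> e u u)"
  shows "\<forall>x y z z'. (x,y,z)\<in>T \<longrightarrow> (x,y,z')\<in>T \<longrightarrow> z = z'"
proof -
  have cls: "(\<exists>a b c. (a,b,c) \<in> G \<and> (p,q,r) = (a,b,c)) \<or>
             (\<exists>a b c. (a,b,c) \<in> G \<and> (p,q,r) = (a,c,b)) \<or>
             (\<exists>a b c. (a,b,c) \<in> G \<and> (p,q,r) = (c,\<iota> b,a)) \<or>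
             (\<exists>a b c. (a,b,c) \<in> G \<and> (p,q,r) = (c,a,\<iota> b)) \<or>
             (\<exists>a b c. (a,b,c) \<in> G \<and> (p,q,r) = (b,c,a)) \<or>
             (\<exists>a b c. (a,b,c) \<in> G \<and> (p,q,r) = (\<iota> b,a,c)) \<or>
             (\<exists>u\<in>U. (p,q,r) = (e,u,u)) \<or> (\<exists>u\<in>U. (p,q,r) = (u,u,e)) \<or> (\<exists>u\<in>U. (p,q,r) = (u,e,u))"
    if "(p,q,r) \<in> T" for p q r
  proof -
    from that consider (g) a b c where "(a,b,c) \<in> G" "(p,q,r) \<in> orb \<iota> a b c"
      | (u) u where "u \<in> U" "(p,q,r) \<in> orb \<iota> e u u"
      unfolding T_def by fastforce
    then show ?thesis
    proof cases
      case g
      have "\<iota> a = a" "\<iota> c = c" using GI[OF g(1)] iI by auto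
      then show ?thesis using g unfolding orb_def by auto
    next
      case u
      have "\<iota> u = u" using u UI iI by auto
      then show ?thesis using u ie unfolding orb_def by auto
    qed
  qed
  have cat: "(p \<in> I \<or> p \<in> Np \<or> \<iota> p \<in> Np \<or> p = e) \<and> (q \<in> I \<or> q \<in> Np \<or> \<iota> q \<in> Np \<or> q = e)"
    if "(p,q,r) \<in> T" for p q r
    using cls[OF that] GI UI ii by (elim disjE exE conjE bexE; fastforce)
  have kA: "(p,q,r) \<in> G" if "(p,q,r) \<in> T" "p \<in> I" "q \<in> Np" for p q r
    using cls[OF that(1)] that(2,3) GI UI dis dis2 ii
    by (elim disjE exE conjE bexE; (simp only: prod.inject)?; metis subsetD)
  have kB: "(p,r,q) \<in> G \<or> (q, \<iota> r, p) \<in> G \<or> (p = q \<and> r = e)" if "(p,q,r) \<in> T" "p \<in> I" "q \<in> I" for p q r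
    using cls[OF that(1)] that(2,3) GI UI dis dis2 ii
    by (elim disjE exE conjE bexE; (simp only: prod.inject)?; metis subsetD)
  have kC: "(r, \<iota> q, p) \<in> G" if "(p,q,r) \<in> T" "p \<in> I" "\<iota> q \<in> Np" for p q r
    using cls[OF that(1)] that(2,3) GI UI dis dis2 ii
    by (elim disjE exE conjE bexE; (simp only: prod.inject)?; metis subsetD)
  have kE: "(r, p, q) \<in> G" if "(p,q,r) \<in> T" "p \<in> Np" for p q r
    using cls[OF that(1)] that(2) GI UI dis dis2 ii
    by (elim disjE exE conjE bexE; (simp only: prod.inject)?; metis subsetD)
  have kF: "(q, \<iota> p, r) \<in> G" if "(p,q,r) \<in> T" "\<iota> p \<in> Np" for p q r
    using cls[OF that(1)] that(2) GI UI dis dis2 ii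
    by (elim disjE exE conjE bexE; (simp only: prod.inject)?; metis subsetD)
  have kU1: "r = q" if "(p,q,r) \<in> T" "p = e" for p q r
    using cls[OF that(1)] that(2) GI UI dis dis2 ii
    by (elim disjE exE conjE bexE; (simp only: prod.inject)?; metis subsetD)
  have kU3: "r = p" if "(p,q,r) \<in> T" "p \<in> I" "q = e" for p q r
    using cls[OF that(1)] that(2,3) GI UI dis dis2 ii
    by (elim disjE exE conjE bexE; (simp only: prod.inject)?; metis subsetD)
  show ?thesis
  proof (intro allI impI)
    fix x y z z' assume h1: "(x,y,z) \<in> T" and h2: "(x,y,z') \<in> T"
    have cx: "x \<in> I \<or> x \<in> Np \<or> \<iota> x \<in> Np \<or> x = e" and cy: "y \<in> I \<or> y \<in> Np \<or> \<iota> y \<in> Np \<or> y = e"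
      using cat[OF h1] by blast+
    show "z = z'"
    proof -
      { assume "x = e" then have ?thesis using kU1[OF h1] kU1[OF h2] by simp }
      moreover
      { assume "x \<in> Np" then have ?thesis using kE[OF h1] kE[OF h2] Ginj by blast }
      moreover
      { assume "\<iota> x \<in> Np" then have ?thesis using kF[OF h1] kF[OF h2] Gfun by blast }
      moreover
      { assume x: "x \<in> I"
        { assume "y = e" then have ?thesis using kU3[OF h1 x] kU3[OF h2 x] by simp }
        moreover
        { assume "y \<in> Np" then have ?thesis using kA[OF h1 x] kA[OF h2 x] Gfun by blast }
        moreover
        { assume "\<iota> y \<in> Np" then have ?thesis using kC[OF h1 x] kC[OF h2 x] Ginj by blast }
        moreover
        { assume y: "y \<in> I"
          note b1 = kB[OF h1 x y] and b2 = kB[OF h2 x y]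
          have ?thesis
          proof -
            { assume 1: "(x,z,y) \<in> G" and 2: "(x,z',y) \<in> G"
              then have ?thesis using Gedge[OF 1 2] by blast }
            moreover
            { assume 1: "(x,z,y) \<in> G" and 2: "(y,\<iota> z',x) \<in> G"
              then have "x = y" using Gedge[OF 1 2] by blast
              then have False using GI[OF 1] by blast }
            moreover
            { assume 1: "(y,\<iota> z,x) \<in> G" and 2: "(x,z',y) \<in> G"
              then have "x = y" using Gedge[OF 1 2] by blast
              then have False using GI[OF 1] by blast }
            moreover
            { assume 1: "(y,\<iota> z,x) \<in> G" and 2: "(y,\<iota> z',x) \<in> G"
              then have "\<iota> z = \<iota> z'" using Gedge[OF 1 2] by blast
              then have ?thesis using ii by metis }
            moreover
            { assume "x = y" and 1: "(x,z,y) \<in> G"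
              then have False using GI[OF 1] by blast }
            moreover
            { assume "x = y" and 1: "(y,\<iota> z,x) \<in> G"
              then have False using GI[OF 1] by blast }
            moreover
            { assume "x = y" and 1: "(x,z',y) \<in> G"
              then have False using GI[OF 1] by blast }
            moreover
            { assume "x = y" and 1: "(y,\<iota> z',x) \<in> G"
              then have False using GI[OF 1] by blast }
            ultimately show ?thesis using b1 b2 by blast
          qed }
        ultimately have ?thesis using cy by blast }
      ultimately show ?thesis using cx by blast
    qed
  qed
qed


lemma modlem: "(k::nat) < n \<Longrightarrow> s < n \<Longrightarrow> (k + s) mod n = (if k + s < n then k + s else k + s - n)"
proof -
  assume a: "k < n" "s < n"
  show ?thesis
  proof (cases "k + s < n")
    case True then show ?thesis by simp
  next
    case False
    then have "k + s = (k + s - n) + n" "k + s - n < n" using a by auto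
    then have "(k + s) mod n = (k + s - n) mod n" by (metis mod_add_self2)
    then show ?thesis using False \<open>k + s - n < n\<close> by simp
  qed
qed

lemma L1: "(k::nat) < n \<Longrightarrow> k' < n \<Longrightarrow> s < n \<Longrightarrow> (k+s) mod n = (k'+s) mod n \<Longrightarrow> k = k'"
  using modlem[of k n s] modlem[of k' n s] by (auto split: if_splits)

lemma L2: "(k::nat) < n \<Longrightarrow> s < n \<Longrightarrow> s' < n \<Longrightarrow> (k+s) mod n = (k+s') mod n \<Longrightarrow> s = s'"
  using modlem[of k n s] modlem[of k n s'] by (auto split: if_splits)

lemma L3: "(k::nat) < n \<Longrightarrow> k' < n \<Longrightarrow> 0 < s \<Longrightarrow> 0 < s' \<Longrightarrow> s + s' < n \<Longrightarrow>
   k = (k'+s') mod n \<Longrightarrow> k' = (k+s) mod n \<Longrightarrow> False"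
proof -
  assume a: "k < n" "k' < n" "0 < s" "0 < s'" "s + s' < n" "k = (k'+s') mod n" "k' = (k+s) mod n"
  have A: "(k+s<n \<and> k' = k+s) \<or> (\<not> k+s<n \<and> k' = k+s-n)" using modlem[of k n s] a(1,5,7) by simp
  have B: "(k'+s'<n \<and> k = k'+s') \<or> (\<not> k'+s'<n \<and> k = k'+s'-n)" using modlem[of k' n s'] a(2,5,6) by simp
  from A B a(3,4,5) show False by linarith
qed

lemma L4: "(k::nat) < n \<Longrightarrow> s < n \<Longrightarrow> p + s < n \<Longrightarrow> (k+s) mod n = p + s \<Longrightarrow> k = p"
  using modlem[of k n s] by (auto split: if_splits)

lemma L6: "(s::nat) < B \<Longrightarrow> s' < B \<Longrightarrow> B*q + s = B*q' + s' \<Longrightarrow> q = q' \<and> s = s'"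
proof -
  assume a: "s < B" "s' < B" "B*q + s = B*q' + s'"
  have B: "B > 0" using a by simp
  have "(B*q + s) div B = q" using a(1) B by simp
  moreover have "(B*q' + s') div B = q'" using a(2) B by simp
  moreover have "(B*q + s) mod B = s" "(B*q' + s') mod B = s'" using a(1,2) by auto
  ultimately show ?thesis using a(3) by metis
qed


lemma L5: "0 < (s::nat) \<Longrightarrow> s < B \<Longrightarrow> B*q \<noteq> B*q' + s"
  using L6[of 0 B s q q'] by auto

lemma L7: "(a::nat) < M \<Longrightarrow> a' < M \<Longrightarrow> b*M + a = b'*M + a' \<Longrightarrow> b = b' \<and> a = a'"
  using L6[of a M a' b b'] by (simp add: mult.commute)

lemma L8: "(k::nat) < n \<Longrightarrow> 0 < s \<Longrightarrow> s < n \<Longrightarrow> k \<noteq> (k+s) mod n"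
  using modlem[of k n s] by (auto split: if_splits)

lemma L9: "(k::nat) < n \<Longrightarrow> s < n \<Longrightarrow> ((k + n - s) mod n + s) mod n = k \<and> (k + n - s) mod n < n"
proof -
  assume a: "k < n" "s < n"
  have lt: "(k + n - s) mod n < n" using a by simp
  have "((k + n - s) mod n + s) mod n = ((k + n - s) + s) mod n" by (simp add: mod_add_left_eq)
  also have "\<dots> = (k + n) mod n" using a by simp
  also have "\<dots> = k" using a by simp
  finally show ?thesis using lt by simp
qed


lemma card_gap_eq:
  assumes pil: "partial_ip_loop S m e" and fin: "finite S" and y: "y \<in> S"
  shows "card {x \<in> S. m x y = None} = card {z \<in> S. m z (pinv S m e y) = None}"
proof -
  note P = pil_props[OF pil]
  define iy where "iy = pinv S m e y"
  have iyS: "iy \<in> S" unfolding iy_def using P(2) y by blast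
  have iiy: "pinv S m e iy = y" unfolding iy_def using P(7) y by blast
  define Dom where "Dom = {x \<in> S. m x y \<noteq> None}"
  define Img where "Img = {z \<in> S. m z iy \<noteq> None}"
  define f where "f x = the (m x y)" for x
  have fx: "m x y = Some (f x)" if "x \<in> Dom" for x using that unfolding Dom_def f_def by auto
  have bij: "bij_betw f Dom Img"
  proof (rule bij_betwI')
    fix x x' assume xx: "x \<in> Dom" "x' \<in> Dom"
    have "x \<in> S" "x' \<in> S" using xx Dom_def by auto
    have fS: "f x \<in> S" using P(3)[rule_format, OF \<open>x \<in> S\<close> y fx[OF xx(1)]] .
    have 1: "m (f x) iy = Some x" unfolding iy_def using P(6)[rule_format, OF \<open>x \<in> S\<close> y fx[OF xx(1)]] by (rule conjunct2)
    have 2: "m (f x') iy = Some x'" unfolding iy_def using P(6)[rule_format, OF \<open>x' \<in> S\<close> y fx[OF xx(2)]] by (rule conjunct2)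
    show "(f x = f x') = (x = x')" using 1 2 by (metis option.inject)
  next
    fix x assume x: "x \<in> Dom"
    have "x \<in> S" using x Dom_def by auto
    have fS: "f x \<in> S" using P(3)[rule_format, OF \<open>x \<in> S\<close> y fx[OF x]] .
    have 1: "m (f x) iy = Some x" unfolding iy_def using P(6)[rule_format, OF \<open>x \<in> S\<close> y fx[OF x]] by (rule conjunct2)
    show "f x \<in> Img" using fS 1 Img_def by auto
  next
    fix z assume z: "z \<in> Img"
    then obtain x where zx: "z \<in> S" "m z iy = Some x" using Img_def by auto
    have xS: "x \<in> S" using P(3)[rule_format, OF zx(1) iyS zx(2)] .
    have "m x (pinv S m e iy) = Some z" using P(6)[rule_format, OF zx(1) iyS zx(2)] by (rule conjunct2)
    then have mx: "m x y = Some z" using iiy by simp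
    then have "x \<in> Dom" using xS Dom_def by auto
    moreover have "z = f x" using mx unfolding f_def by simp
    ultimately show "\<exists>x\<in>Dom. z = f x" by blast
  qed
  have c: "card Dom = card Img" using bij_betw_same_card[OF bij] .
  have "{x \<in> S. m x y = None} = S - Dom" "{z \<in> S. m z iy = None} = S - Img"
    unfolding Dom_def Img_def by auto
  moreover have "card (S - Dom) = card S - card Dom" by (rule card_Diff_subset) (use fin Dom_def in auto)
  moreover have "card (S - Img) = card S - card Img" by (rule card_Diff_subset) (use fin Img_def in auto)
  ultimately show ?thesis using c iy_def by simp
qed


lemma stage2:
  fixes S :: "'b set" and \<nu> :: "nat \<Rightarrow> 'b"
  assumes pil: "partial_ip_loop S m e" and fin: "finite S"
  and hyp: "\<forall>x\<in>S. \<forall>y\<in>S. m x y = None \<longrightarrow> y \<noteq> pinv S m e y \<longrightarrow> (x \<noteq> e \<and> m x x = Some e)"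
  and nu: "inj \<nu>" "\<forall>k. \<nu> k \<notin> S"
  and nbig: "2 * (card S + 1) * card S * card S \<le> n"
  shows "\<exists>m'. partial_ip_loop (S \<union> \<nu> ` {..<n}) m' e \<and>
     (\<forall>x\<in>S. \<forall>y\<in>S. m x y \<noteq> None \<longrightarrow> m' x y = m x y) \<and>
     O3 (S \<union> \<nu> ` {..<n}) m' e = O3 S m e \<and>
     gaps (S \<union> \<nu> ` {..<n}) m' \<subseteq> O2 (S \<union> \<nu> ` {..<n}) m' e \<times> O2 (S \<union> \<nu> ` {..<n}) m' e"
proof -
  note P = pil_props[OF pil]
  define \<iota> where "\<iota> = pinv S m e"
  have eS: "e \<in> S" using P(1) .
  have iS: "\<And>x. x \<in> S \<Longrightarrow> \<iota> x \<in> S" using P(2) \<iota>_def by blast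
  have ii: "\<And>x. x \<in> S \<Longrightarrow> \<iota> (\<iota> x) = x" using P(7) \<iota>_def by blast
  have ie: "\<iota> e = e" using P(8) \<iota>_def by blast
  have inv1: "\<And>x. x \<in> S \<Longrightarrow> m x (\<iota> x) = Some e" using P(5) \<iota>_def by blast
  have invU: "\<And>x y. x \<in> S \<Longrightarrow> y \<in> S \<Longrightarrow> m x y = Some e \<Longrightarrow> y = \<iota> x"
    using P(9) \<iota>_def by blast
  have unitS: "\<And>x. x \<in> S \<Longrightarrow> m x e = Some x" using P(4) by blast
  define M where "M = card S"
  obtain \<phi> :: "'b \<Rightarrow> nat" where \<phi>: "inj_on \<phi> S" "\<And>x. x \<in> S \<Longrightarrow> \<phi> x < M"
  proof -
    obtain f k where f: "f ` S = {i::nat. i < k}" "inj_on f S" using finite_imp_inj_to_nat_seg[OF fin] by blast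
    have "card (f ` S) = M" using card_image[OF f(2)] M_def by simp
    then have "k = M" using f(1) by simp
    then show ?thesis using that[of f] f by blast
  qed
  have M1: "M \<ge> 1" using eS fin M_def by (metis One_nat_def Suc_leI card_gt_0_iff empty_iff)
  define Np where "Np = {y \<in> S. y \<noteq> \<iota> y \<and> \<phi> y < \<phi> (\<iota> y)}"
  define \<sigma> where "\<sigma> y = \<phi> y + 1" for y
  define B where "B = 2 * (M + 1)"
  define sp where "sp y d = B * (\<phi> y * M + \<phi> d)" for y d
  define D where "D y = {x \<in> S. m x y = None}" for y
  define R where "R y = {z \<in> S. m z (\<iota> y) = None}" for y
  define g where "g y = (SOME f. bij_betw f (D y) (R y))" for y
  define K where "K = \<nu> ` {..<n}"
  define \<iota>' where "\<iota>' x = (if x \<in> S then \<iota> x else x)" for x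
  define I where "I = {x \<in> S. x \<noteq> e \<and> \<iota> x = x} \<union> K"
  define G1 where "G1 = {(\<nu> k, y, \<nu> ((k + \<sigma> y) mod n)) | k y. y \<in> Np \<and> k < n \<and> k \<notin> sp y ` D y}"
  define G2 where "G2 = {(\<nu> (sp y d), y, g y d) | y d. y \<in> Np \<and> d \<in> D y}"
  define G3 where "G3 = {(d, y, \<nu> (sp y d + \<sigma> y)) | y d. y \<in> Np \<and> d \<in> D y}"
  define G where "G = G1 \<union> G2 \<union> G3"
  define T where "T = (\<Union>g\<in>G. case g of (a,b,c) \<Rightarrow> orb \<iota>' a b c) \<union> (\<Union>u\<in>K. orb \<iota>' e u u)"
  define m' where "m' = ext S m T"
  have NpS: "\<And>y. y \<in> Np \<Longrightarrow> y \<in> S" using Np_def by blast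
  have Npi: "\<And>y. y \<in> Np \<Longrightarrow> \<iota> y \<noteq> y" unfolding Np_def by auto
  have Npii: "\<And>y. y \<in> Np \<Longrightarrow> \<iota> y \<notin> Np"
  proof
    fix y assume y: "y \<in> Np" "\<iota> y \<in> Np"
    then have "\<phi> (\<iota> y) < \<phi> (\<iota> (\<iota> y))" using Np_def by blast
    then have "\<phi> (\<iota> y) < \<phi> y" using ii NpS y by simp
    then show False using y(1) Np_def by simp
  qed
  have Npe: "\<And>y. y \<in> Np \<Longrightarrow> y \<noteq> e \<and> \<iota> y \<noteq> e"
    using Npi ie ii NpS by metis
  have \<sigma>b: "\<And>y. y \<in> S \<Longrightarrow> 1 \<le> \<sigma> y \<and> \<sigma> y \<le> M" using \<phi>(2) \<sigma>_def by (simp add: Suc_leI)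
  have \<sigma>inj: "\<And>y y'. y \<in> S \<Longrightarrow> y' \<in> S \<Longrightarrow> \<sigma> y = \<sigma> y' \<Longrightarrow> y = y'"
    using \<phi>(1) \<sigma>_def by (simp add: inj_on_eq_iff)
  have BM: "B > M" "B > 0" using B_def by simp_all
  have spb: "\<And>y d. y \<in> S \<Longrightarrow> d \<in> S \<Longrightarrow> sp y d + \<sigma> y < n"
  proof -
    fix y d assume yd: "y \<in> S" "d \<in> S"
    have q: "\<phi> y * M + \<phi> d + 1 \<le> M * M"
    proof -
      have "(\<phi> y + 1) * M \<le> M * M" using \<phi>(2)[OF yd(1)] by (intro mult_le_mono1) simp
      then show ?thesis using \<phi>(2)[OF yd(2)] by (simp add: algebra_simps)
    qed
    have "sp y d + \<sigma> y < B * (\<phi> y * M + \<phi> d) + B" using \<sigma>b[OF yd(1)] BM sp_def by simp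
    also have "\<dots> = B * (\<phi> y * M + \<phi> d + 1)" by (simp add: algebra_simps)
    also have "\<dots> \<le> B * (M * M)" using q by (intro mult_le_mono2)
    also have "\<dots> \<le> n" using nbig B_def M_def by (simp add: algebra_simps)
    finally show "sp y d + \<sigma> y < n" .
  qed
  have n2M: "2 * M < n"
  proof -
    have "2 * M < B" using B_def by simp
    also have "B \<le> B * (M * M)" using M1 by simp
    also have "\<dots> \<le> n" using nbig B_def M_def by (simp add: algebra_simps)
    finally show ?thesis .
  qed
  have spinj: "\<And>y d y' d'. y \<in> S \<Longrightarrow> d \<in> S \<Longrightarrow> y' \<in> S \<Longrightarrow> d' \<in> S \<Longrightarrow> sp y d = sp y' d' \<Longrightarrow> y = y' \<and> d = d'"
  proof -
    fix y d y' d' assume h: "y \<in> S" "d \<in> S" "y' \<in> S" "d' \<in> S" "sp y d = sp y' d'"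
    then have "\<phi> y * M + \<phi> d = \<phi> y' * M + \<phi> d'" using sp_def BM by simp
    then have "\<phi> y = \<phi> y' \<and> \<phi> d = \<phi> d'" using L7 \<phi>(2) h by blast
    then show "y = y' \<and> d = d'" using \<phi>(1) h by (simp add: inj_on_eq_iff)
  qed
  have sp\<sigma>: "\<And>y d y' d'. y \<in> S \<Longrightarrow> d \<in> S \<Longrightarrow> y' \<in> S \<Longrightarrow> d' \<in> S \<Longrightarrow> sp y d \<noteq> sp y' d' + \<sigma> y'"
  proof -
    fix y d y' d' assume h: "y \<in> S" "d \<in> S" "y' \<in> S" "d' \<in> S"
    have "0 < \<sigma> y'" "\<sigma> y' < B" using \<sigma>b[OF h(3)] BM by auto
    then show "sp y d \<noteq> sp y' d' + \<sigma> y'" unfolding sp_def using L5 by blast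
  qed
  have sp\<sigma>inj: "\<And>y d y' d'. y \<in> S \<Longrightarrow> d \<in> S \<Longrightarrow> y' \<in> S \<Longrightarrow> d' \<in> S \<Longrightarrow>
      sp y d + \<sigma> y = sp y' d' + \<sigma> y' \<Longrightarrow> y = y' \<and> d = d'"
  proof -
    fix y d y' d' assume h: "y \<in> S" "d \<in> S" "y' \<in> S" "d' \<in> S" "sp y d + \<sigma> y = sp y' d' + \<sigma> y'"
    have "\<sigma> y < B" "\<sigma> y' < B" using \<sigma>b h BM by fastforce+
    then have "\<phi> y * M + \<phi> d = \<phi> y' * M + \<phi> d' \<and> \<sigma> y = \<sigma> y'" using L6 h(5) sp_def by metis
    then have "sp y d = sp y' d'" using sp_def by simp
    then show "y = y' \<and> d = d'" using spinj h by blast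
  qed
  have Dfacts: "\<And>y d. y \<in> Np \<Longrightarrow> d \<in> D y \<Longrightarrow> d \<in> S \<and> m d y = None \<and> d \<noteq> e \<and> \<iota> d = d"
  proof -
    fix y d assume h: "y \<in> Np" "d \<in> D y"
    have dS: "d \<in> S" and md: "m d y = None" using h(2) D_def by auto
    have "y \<noteq> pinv S m e y" using Npi[OF h(1)] \<iota>_def by simp
    then have "d \<noteq> e \<and> m d d = Some e" using hyp dS NpS[OF h(1)] md by blast
    then show "d \<in> S \<and> m d y = None \<and> d \<noteq> e \<and> \<iota> d = d" using invU[OF dS dS] dS md by simp
  qed
  have Rfacts: "\<And>y r. y \<in> Np \<Longrightarrow> r \<in> R y \<Longrightarrow> r \<in> S \<and> m r (\<iota> y) = None \<and> r \<noteq> e \<and> \<iota> r = r"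
  proof -
    fix y r assume h: "y \<in> Np" "r \<in> R y"
    have rS: "r \<in> S" and mr: "m r (\<iota> y) = None" using h(2) R_def by auto
    have iyS: "\<iota> y \<in> S" using iS NpS h(1) by blast
    have "\<iota> y \<noteq> pinv S m e (\<iota> y)" using Npi[OF h(1)] ii[OF NpS[OF h(1)]] \<iota>_def by simp
    then have "r \<noteq> e \<and> m r r = Some e" using hyp rS iyS mr by blast
    then show "r \<in> S \<and> m r (\<iota> y) = None \<and> r \<noteq> e \<and> \<iota> r = r" using invU[OF rS rS] rS mr by simp
  qed
  have gbij: "\<And>y. y \<in> Np \<Longrightarrow> bij_betw (g y) (D y) (R y)"
  proof -
    fix y assume y: "y \<in> Np"
    have "card (D y) = card (R y)" unfolding D_def R_def \<iota>_def
      using card_gap_eq[OF pil fin NpS[OF y]] .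
    moreover have "finite (D y)" "finite (R y)" using fin D_def R_def by auto
    ultimately have "\<exists>f. bij_betw f (D y) (R y)" using finite_same_card_bij by blast
    then show "bij_betw (g y) (D y) (R y)" unfolding g_def by (rule someI_ex)
  qed
  have gR: "\<And>y d. y \<in> Np \<Longrightarrow> d \<in> D y \<Longrightarrow> g y d \<in> R y"
    by (rule bij_betw_apply[OF gbij])
  have gsurj: "\<And>y r. y \<in> Np \<Longrightarrow> r \<in> R y \<Longrightarrow> \<exists>d\<in>D y. r = g y d"
  proof -
    fix y r assume h: "y \<in> Np" "r \<in> R y"
    have "g y ` D y = R y" using bij_betw_imp_surj_on[OF gbij[OF h(1)]] .
    then show "\<exists>d\<in>D y. r = g y d" using h(2) by (metis imageE)
  qed
  have ginj: "\<And>y d d'. y \<in> Np \<Longrightarrow> d \<in> D y \<Longrightarrow> d' \<in> D y \<Longrightarrow> g y d = g y d' \<Longrightarrow> d = d'"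
    using bij_betw_imp_inj_on[OF gbij] inj_onD by metis
  have npos: "0 < n" using n2M by simp
  have nuK: "\<And>k. k < n \<Longrightarrow> \<nu> k \<in> K" using K_def by simp
  have KS: "\<And>x. x \<in> K \<Longrightarrow> x \<notin> S" using K_def nu(2) by auto
  have nueq: "\<And>k k'. \<nu> k = \<nu> k' \<longleftrightarrow> k = k'" using nu(1) by (simp add: inj_eq)
  have nuS: "\<And>k x. x \<in> S \<Longrightarrow> \<nu> k \<noteq> x" using nu(2) by blast
  have Gcases: "\<And>a b c. (a,b,c) \<in> G \<Longrightarrow> b \<in> Np \<and>
     ((\<exists>k. k<n \<and> k \<notin> sp b ` D b \<and> a = \<nu> k \<and> c = \<nu> ((k + \<sigma> b) mod n)) \<or>
      (\<exists>d\<in>D b. a = \<nu> (sp b d) \<and> c = g b d) \<or>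
      (\<exists>d\<in>D b. a = d \<and> c = \<nu> (sp b d + \<sigma> b)))"
    unfolding G_def G1_def G2_def G3_def by blast
  have KI: "\<And>x. x \<in> K \<Longrightarrow> x \<in> I" unfolding I_def by simp
  have SI: "\<And>x. x \<in> S \<Longrightarrow> x \<noteq> e \<Longrightarrow> \<iota> x = x \<Longrightarrow> x \<in> I" unfolding I_def by simp
  have GI: "\<And>a b c. (a,b,c) \<in> G \<Longrightarrow> a \<in> I \<and> c \<in> I \<and> b \<in> Np \<and> a \<noteq> c"
  proof -
    fix a b c assume abc: "(a,b,c) \<in> G"
    note C = Gcases[OF abc]
    have bN: "b \<in> Np" using C by blast
    have bS: "b \<in> S" using bN NpS by blast
    let ?thesis = "a \<in> I \<and> c \<in> I \<and> b \<in> Np \<and> a \<noteq> c"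
    have c1: ?thesis if k: "k<n" "a = \<nu> k" "c = \<nu> ((k + \<sigma> b) mod n)" for k
    proof -
      have "0 < \<sigma> b" "\<sigma> b < n" using \<sigma>b[OF bS] n2M by auto
      then have "k \<noteq> (k + \<sigma> b) mod n" using L8 k(1) by blast
      then have "a \<noteq> c" using k(2,3) nueq by simp
      moreover have "(k + \<sigma> b) mod n < n" using npos by simp
      ultimately show ?thesis using k(1,2,3) nuK KI bN by simp
    qed
    have c2: ?thesis if d: "d \<in> D b" "a = \<nu> (sp b d)" "c = g b d" for d
    proof -
      have dS: "d \<in> S" using Dfacts[OF bN d(1)] by blast
      have "sp b d < n" using spb[OF bS dS] by simp
      then have aI: "a \<in> I" using d(2) nuK KI by simp
      have gr: "g b d \<in> R b" using gR[OF bN d(1)] .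
      have cS: "c \<in> S" "c \<noteq> e" "\<iota> c = c" using Rfacts[OF bN gr] d(3) by auto
      have "a \<noteq> c" using d(2) nuS[OF cS(1)] by simp
      then show ?thesis using aI SI[OF cS] bN by simp
    qed
    have c3: ?thesis if d: "d \<in> D b" "a = d" "c = \<nu> (sp b d + \<sigma> b)" for d
    proof -
      have dF: "d \<in> S" "d \<noteq> e" "\<iota> d = d" using Dfacts[OF bN d(1)] by auto
      have "sp b d + \<sigma> b < n" using spb[OF bS dF(1)] by simp
      then have cI: "c \<in> I" using d(3) nuK KI by simp
      have "a \<noteq> c" using d(2,3) nuS[OF dF(1)] by metis
      then show ?thesis using cI SI[OF dF] d(2) bN by simp
    qed
    show "a \<in> I \<and> c \<in> I \<and> b \<in> Np \<and> a \<noteq> c" using C c1 c2 c3 by blast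
  qed
  have DS: "\<And>y d. y \<in> Np \<Longrightarrow> d \<in> D y \<Longrightarrow> d \<in> S" using Dfacts by blast
  have Gfun: "\<And>a b c c'. (a,b,c) \<in> G \<Longrightarrow> (a,b,c') \<in> G \<Longrightarrow> c = c'"
  proof -
    fix a b c c' assume h1: "(a,b,c) \<in> G" and h2: "(a,b,c') \<in> G"
    note C1 = Gcases[OF h1] and C2 = Gcases[OF h2]
    have bN: "b \<in> Np" using C1 by blast
    have bS: "b \<in> S" using bN NpS by blast
    from C1 C2 show "c = c'"
    proof (elim conjE disjE exE bexE)
      fix k k' assume "a = \<nu> k" "a = \<nu> k'" "c = \<nu> ((k + \<sigma> b) mod n)" "c' = \<nu> ((k' + \<sigma> b) mod n)"
      then show ?thesis using nueq by simp
    next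
      fix k d assume "k \<notin> sp b ` D b" "d \<in> D b" "a = \<nu> k" "a = \<nu> (sp b d)"
      then show ?thesis using nueq by auto
    next
      fix k d assume "d \<in> D b" "a = \<nu> k" "a = d"
      then show ?thesis using nuS DS[OF bN] by metis
    next
      fix k d assume "k \<notin> sp b ` D b" "d \<in> D b" "a = \<nu> k" "a = \<nu> (sp b d)"
      then show ?thesis using nueq by auto
    next
      fix d d' assume "d \<in> D b" "d' \<in> D b" "a = \<nu> (sp b d)" "a = \<nu> (sp b d')" "c = g b d" "c' = g b d'"
      then show ?thesis using nueq spinj[OF bS DS[OF bN] bS DS[OF bN]] by metis
    next
      fix d d' assume "d \<in> D b" "d' \<in> D b" "a = \<nu> (sp b d)" "a = d'"
      then show ?thesis using nuS DS[OF bN] by metis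
    next
      fix k d assume "d \<in> D b" "a = \<nu> k" "a = d"
      then show ?thesis using nuS DS[OF bN] by metis
    next
      fix d d' assume "d \<in> D b" "d' \<in> D b" "a = \<nu> (sp b d')" "a = d"
      then show ?thesis using nuS DS[OF bN] by metis
    next
      fix d d' assume "a = d" "a = d'" "c = \<nu> (sp b d + \<sigma> b)" "c' = \<nu> (sp b d' + \<sigma> b)"
      then show ?thesis by simp
    qed
  qed
  have Ginj: "\<And>a a' b c. (a,b,c) \<in> G \<Longrightarrow> (a',b,c) \<in> G \<Longrightarrow> a = a'"
  proof -
    fix a a' b c assume h1: "(a,b,c) \<in> G" and h2: "(a',b,c) \<in> G"
    note C1 = Gcases[OF h1] and C2 = Gcases[OF h2]
    have bN: "b \<in> Np" using C1 by blast
    have bS: "b \<in> S" using bN NpS by blast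
    have sb: "\<sigma> b < n" using \<sigma>b[OF bS] n2M by auto
    have gS: "\<And>d. d \<in> D b \<Longrightarrow> g b d \<in> S" using Rfacts[OF bN] gR[OF bN] by blast
    from C1 C2 show "a = a'"
    proof (elim conjE disjE exE bexE)
      fix k k' assume "k < n" "k' < n" "a = \<nu> k" "a' = \<nu> k'" "c = \<nu> ((k + \<sigma> b) mod n)" "c = \<nu> ((k' + \<sigma> b) mod n)"
      then show ?thesis using nueq L1[of k n k' "\<sigma> b"] sb by simp
    next
      fix k d assume "d \<in> D b" "c = \<nu> ((k + \<sigma> b) mod n)" "c = g b d"
      then show ?thesis using nuS gS by metis
    next
      fix k d assume "k < n" "k \<notin> sp b ` D b" "d \<in> D b" "c = \<nu> ((k + \<sigma> b) mod n)" "c = \<nu> (sp b d + \<sigma> b)"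
      then have "(k + \<sigma> b) mod n = sp b d + \<sigma> b" using nueq by metis
      then have "k = sp b d" using L4[of k n "\<sigma> b" "sp b d"] sb spb[OF bS DS[OF bN]] \<open>k < n\<close> \<open>d \<in> D b\<close> by blast
      then show ?thesis using \<open>k \<notin> sp b ` D b\<close> \<open>d \<in> D b\<close> by blast
    next
      fix k d assume "d \<in> D b" "c = \<nu> ((k + \<sigma> b) mod n)" "c = g b d"
      then show ?thesis using nuS gS by metis
    next
      fix d d' assume "d \<in> D b" "d' \<in> D b" "a = \<nu> (sp b d)" "c = g b d" "a' = \<nu> (sp b d')" "c = g b d'"
      then show ?thesis using ginj[OF bN] by metis
    next
      fix d d' assume "d \<in> D b" "d' \<in> D b" "c = g b d" "c = \<nu> (sp b d' + \<sigma> b)"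
      then show ?thesis using nuS gS by metis
    next
      fix k d assume "k < n" "k \<notin> sp b ` D b" "d \<in> D b" "c = \<nu> ((k + \<sigma> b) mod n)" "c = \<nu> (sp b d + \<sigma> b)"
      then have "(k + \<sigma> b) mod n = sp b d + \<sigma> b" using nueq by metis
      then have "k = sp b d" using L4[of k n "\<sigma> b" "sp b d"] sb spb[OF bS DS[OF bN]] \<open>k < n\<close> \<open>d \<in> D b\<close> by blast
      then show ?thesis using \<open>k \<notin> sp b ` D b\<close> \<open>d \<in> D b\<close> by blast
    next
      fix d d' assume "d \<in> D b" "d' \<in> D b" "c = g b d'" "c = \<nu> (sp b d + \<sigma> b)"
      then show ?thesis using nuS gS by metis
    next
      fix d d' assume "d \<in> D b" "d' \<in> D b" "a = d" "a' = d'" "c = \<nu> (sp b d + \<sigma> b)" "c = \<nu> (sp b d' + \<sigma> b)"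
      then have "sp b d + \<sigma> b = sp b d' + \<sigma> b" using nueq by metis
      then have "d = d'" using sp\<sigma>inj[OF bS DS[OF bN] bS DS[OF bN]] \<open>d \<in> D b\<close> \<open>d' \<in> D b\<close> by blast
      then show ?thesis using \<open>a = d\<close> \<open>a' = d'\<close> by simp
    qed
  qed
  have gS: "\<And>b d. b \<in> Np \<Longrightarrow> d \<in> D b \<Longrightarrow> g b d \<in> S" using Rfacts gR by blast
  have Gedge: "\<And>a b c a' b' c'. (a,b,c) \<in> G \<Longrightarrow> (a',b',c') \<in> G \<Longrightarrow>
       (a = a' \<and> c = c') \<or> (a = c' \<and> c = a') \<Longrightarrow> a = a' \<and> b = b' \<and> c = c'"
  proof -
    fix a b c a' b' c' assume h1: "(a,b,c) \<in> G" and h2: "(a',b',c') \<in> G"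
      and H: "(a = a' \<and> c = c') \<or> (a = c' \<and> c = a')"
    note C1 = Gcases[OF h1] and C2 = Gcases[OF h2]
    have bN: "b \<in> Np" "b' \<in> Np" using C1 C2 by blast+
    have bS: "b \<in> S" "b' \<in> S" using bN NpS by blast+
    have sb: "0 < \<sigma> b" "0 < \<sigma> b'" "\<sigma> b + \<sigma> b' < n" "\<sigma> b < n" "\<sigma> b' < n"
      using \<sigma>b[OF bS(1)] \<sigma>b[OF bS(2)] n2M by auto
    have DS1: "\<And>d. d \<in> D b \<Longrightarrow> d \<in> S" and DS2: "\<And>d. d \<in> D b' \<Longrightarrow> d \<in> S"
      using DS bN by blast+
    have gS1: "\<And>d. d \<in> D b \<Longrightarrow> g b d \<in> S" and gS2: "\<And>d. d \<in> D b' \<Longrightarrow> g b' d \<in> S"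
      using gS bN by blast+
    show "a = a' \<and> b = b' \<and> c = c'"
    proof (cases "a = a' \<and> c = c'")
      case True
      then have aa: "a = a'" and cc: "c = c'" by auto
      from C1 C2 show ?thesis
      proof (elim conjE disjE exE bexE)
        fix k k' assume "k < n" "k' < n" "a = \<nu> k" "a' = \<nu> k'" "c = \<nu> ((k + \<sigma> b) mod n)" "c' = \<nu> ((k' + \<sigma> b') mod n)"
        then have "k = k'" "(k + \<sigma> b) mod n = (k + \<sigma> b') mod n" using aa cc nueq by metis+
        then have "\<sigma> b = \<sigma> b'" using L2[of k n "\<sigma> b" "\<sigma> b'"] sb \<open>k < n\<close> by blast
        then have "b = b'" using \<sigma>inj bS by blast
        then show ?thesis using aa cc by simp
      next
        fix k d assume "d \<in> D b'" "c = \<nu> ((k + \<sigma> b) mod n)" "c' = g b' d"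
        then show ?thesis using cc nuS gS2 by metis
      next
        fix k d assume "d \<in> D b'" "a = \<nu> k" "a' = d"
        then show ?thesis using aa nuS DS2 by metis
      next
        fix k d assume "d \<in> D b" "c' = \<nu> ((k + \<sigma> b') mod n)" "c = g b d"
        then show ?thesis using cc nuS gS1 by metis
      next
        fix d d' assume "d \<in> D b" "d' \<in> D b'" "a = \<nu> (sp b d)" "c = g b d" "a' = \<nu> (sp b' d')" "c' = g b' d'"
        then have "sp b d = sp b' d'" using aa nueq by metis
        then have "b = b' \<and> d = d'" using spinj bS DS1 DS2 \<open>d \<in> D b\<close> \<open>d' \<in> D b'\<close> by blast
        then show ?thesis using aa cc by simp
      next
        fix d d' assume "d \<in> D b" "d' \<in> D b'" "a = \<nu> (sp b d)" "a' = d'"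
        then show ?thesis using aa nuS DS2 by metis
      next
        fix k d assume "d \<in> D b" "a = d" "a' = \<nu> k"
        then show ?thesis using aa nuS DS1 by metis
      next
        fix d d' assume "d \<in> D b" "d' \<in> D b'" "a = d" "a' = \<nu> (sp b' d')"
        then show ?thesis using aa nuS DS1 by metis
      next
        fix d d' assume "d \<in> D b" "d' \<in> D b'" "a = d" "c = \<nu> (sp b d + \<sigma> b)" "a' = d'" "c' = \<nu> (sp b' d' + \<sigma> b')"
        then have "sp b d + \<sigma> b = sp b' d' + \<sigma> b'" using cc nueq by metis
        then have "b = b' \<and> d = d'" using sp\<sigma>inj bS DS1 DS2 \<open>d \<in> D b\<close> \<open>d' \<in> D b'\<close> by blast
        then show ?thesis using aa cc by simp
      qed
    next
      case False
      then have aa: "a = c'" and cc: "c = a'" using H by auto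
      from C1 C2 show ?thesis
      proof (elim conjE disjE exE bexE)
        fix k k' assume "k < n" "k' < n" "a = \<nu> k" "a' = \<nu> k'" "c = \<nu> ((k + \<sigma> b) mod n)" "c' = \<nu> ((k' + \<sigma> b') mod n)"
        then have "k = (k' + \<sigma> b') mod n" "k' = (k + \<sigma> b) mod n" using aa cc nueq by metis+
        then have False using L3[OF \<open>k < n\<close> \<open>k' < n\<close> sb(1) sb(2) sb(3)] by blast
        then show ?thesis by blast
      next
        fix k d assume "d \<in> D b'" "a = \<nu> k" "c' = g b' d"
        then show ?thesis using aa nuS gS2 by metis
      next
        fix k d assume "d \<in> D b'" "c = \<nu> ((k + \<sigma> b) mod n)" "a' = d"
        then show ?thesis using cc nuS DS2 by metis
      next
        fix k d assume "d \<in> D b" "a' = \<nu> k" "c = g b d"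
        then show ?thesis using cc nuS gS1 by metis
      next
        fix d d' assume "d \<in> D b" "d' \<in> D b'" "c = g b d" "a' = \<nu> (sp b' d')"
        then show ?thesis using cc nuS gS1 by metis
      next
        fix d d' assume "d \<in> D b" "d' \<in> D b'" "a = \<nu> (sp b d)" "c' = \<nu> (sp b' d' + \<sigma> b')"
        then have "sp b d = sp b' d' + \<sigma> b'" using aa nueq by metis
        then show ?thesis using sp\<sigma> bS DS1 DS2 \<open>d \<in> D b\<close> \<open>d' \<in> D b'\<close> by blast
      next
        fix k d assume "d \<in> D b" "a = d" "c' = \<nu> ((k + \<sigma> b') mod n)"
        then show ?thesis using aa nuS DS1 by metis
      next
        fix d d' assume "d \<in> D b" "d' \<in> D b'" "c = \<nu> (sp b d + \<sigma> b)" "a' = \<nu> (sp b' d')"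
        then have "sp b' d' = sp b d + \<sigma> b" using cc nueq by metis
        then show ?thesis using sp\<sigma> bS DS1 DS2 \<open>d \<in> D b\<close> \<open>d' \<in> D b'\<close> by blast
      next
        fix d d' assume "d \<in> D b" "d' \<in> D b'" "a = d" "c' = \<nu> (sp b' d' + \<sigma> b')"
        then show ?thesis using aa nuS DS1 by metis
      qed
    qed
  qed
  have ii': "\<And>x. \<iota>' (\<iota>' x) = x" unfolding \<iota>'_def using iS ii by simp
  have iI': "\<And>x. x \<in> I \<Longrightarrow> \<iota>' x = x" unfolding \<iota>'_def I_def using KS by auto
  have ie': "\<iota>' e = e" unfolding \<iota>'_def using eS ie by simp
  have iNp: "\<And>y. y \<in> Np \<Longrightarrow> \<iota>' y = \<iota> y" unfolding \<iota>'_def using NpS by simp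
  have dis: "\<And>x. x \<in> I \<Longrightarrow> x \<notin> Np \<and> \<iota>' x \<notin> Np \<and> x \<noteq> e"
  proof -
    fix x assume x: "x \<in> I"
    have "x \<notin> Np"
    proof
      assume "x \<in> Np"
      then have "x \<in> S" "\<iota> x \<noteq> x" using NpS Npi by auto
      then show False using x KS unfolding I_def by auto
    qed
    moreover have "x \<noteq> e" using x KS eS unfolding I_def by auto
    ultimately show "x \<notin> Np \<and> \<iota>' x \<notin> Np \<and> x \<noteq> e" using iI'[OF x] by simp
  qed
  have dis2: "\<And>y. y \<in> Np \<Longrightarrow> \<iota>' y \<notin> Np \<and> y \<noteq> e \<and> \<iota>' y \<noteq> e"
    using iNp Npii Npe by simp
  have UI: "K \<subseteq> I" using KI by blast
  have Tfun: "\<forall>x y z z'. (x,y,z)\<in>T \<longrightarrow> (x,y,z')\<in>T \<longrightarrow> z = z'"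
    unfolding T_def
    by (rule gen2_fun[where I=I and Np=Np, OF GI dis dis2 ii' iI' ie' UI Gfun Ginj Gedge])
  have Tmem: "(\<exists>a b c. (a,b,c)\<in>G \<and> ((x,y,z) = (a,b,c) \<or> (x,y,z) = (a,c,b) \<or> (x,y,z) = (c,\<iota>' b,a) \<or>
      (x,y,z) = (c,a,\<iota>' b) \<or> (x,y,z) = (b,c,a) \<or> (x,y,z) = (\<iota>' b,a,c))) \<or>
      (\<exists>u\<in>K. (x,y,z) = (e,u,u) \<or> (x,y,z) = (u,u,e) \<or> (x,y,z) = (u,e,u))"
    if "(x,y,z) \<in> T" for x y z
  proof -
    from that consider (g) a b c where "(a,b,c) \<in> G" "(x,y,z) \<in> orb \<iota>' a b c"
      | (u) u where "u \<in> K" "(x,y,z) \<in> orb \<iota>' e u u"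
      unfolding T_def by fastforce
    then show ?thesis
    proof cases
      case g
      have "\<iota>' a = a" "\<iota>' c = c" using GI[OF g(1)] iI' by auto
      then show ?thesis using g unfolding orb_def by blast
    next
      case u
      have "\<iota>' u = u" using u UI iI' by auto
      then show ?thesis using u ie' unfolding orb_def by auto
    qed
  qed
  have GT: "\<And>a b c. (a,b,c) \<in> G \<Longrightarrow> (a,b,c) \<in> T \<and> (a,c,b) \<in> T \<and> (c,\<iota>' b,a) \<in> T \<and>
      (c,a,\<iota>' b) \<in> T \<and> (b,c,a) \<in> T \<and> (\<iota>' b,a,c) \<in> T"
  proof -
    fix a b c assume abc: "(a,b,c) \<in> G"
    have "\<iota>' a = a" "\<iota>' c = c" using GI[OF abc] iI' by auto
    then have "orb \<iota>' a b c = {(a,b,c),(a,c,b),(c,\<iota>' b,a),(c,a,\<iota>' b),(b,c,a),(\<iota>' b,a,c)}"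
      unfolding orb_def by simp
    moreover have "orb \<iota>' a b c \<subseteq> T" unfolding T_def using abc by fastforce
    ultimately show "(a,b,c) \<in> T \<and> (a,c,b) \<in> T \<and> (c,\<iota>' b,a) \<in> T \<and>
      (c,a,\<iota>' b) \<in> T \<and> (b,c,a) \<in> T \<and> (\<iota>' b,a,c) \<in> T" by blast
  qed
  have KT: "\<And>u. u \<in> K \<Longrightarrow> (e,u,u) \<in> T \<and> (u,u,e) \<in> T \<and> (u,e,u) \<in> T"
  proof -
    fix u assume u: "u \<in> K"
    have "\<iota>' u = u" using u UI iI' by auto
    then have "orb \<iota>' e u u = {(e,u,u),(u,u,e),(u,e,u)}" unfolding orb_def using ie' by auto
    moreover have "orb \<iota>' e u u \<subseteq> T" unfolding T_def using u by blast
    ultimately show "(e,u,u) \<in> T \<and> (u,u,e) \<in> T \<and> (u,e,u) \<in> T" by blast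
  qed
  define S2 where "S2 = S \<union> K"
  have IS2: "I \<subseteq> S2" unfolding I_def S2_def by blast
  have i1: "\<forall>x\<in>S. \<iota>' x = pinv S m e x" unfolding \<iota>'_def \<iota>_def by simp
  have i2: "\<forall>x\<in>S2. \<iota>' x \<in> S2" unfolding \<iota>'_def S2_def using iS by auto
  have i3: "\<forall>x\<in>S2. \<iota>' (\<iota>' x) = x" using ii' by simp
  have Tsub: "\<forall>x y z. (x,y,z)\<in>T \<longrightarrow> x\<in>S2 \<and> y \<in> S2 \<and> z \<in> S2"
  proof (intro allI impI)
    fix x y z assume h: "(x,y,z) \<in> T"
    have gs: "a \<in> S2 \<and> b \<in> S2 \<and> c \<in> S2 \<and> \<iota>' b \<in> S2" if "(a,b,c) \<in> G" for a b c
    proof -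
      have "a \<in> I" "c \<in> I" "b \<in> Np" using GI[OF that] by auto
      then have "a \<in> S2" "c \<in> S2" "b \<in> S2" using IS2 NpS S2_def by auto
      then show ?thesis using i2 by blast
    qed
    have eS2: "e \<in> S2" using eS S2_def by simp
    have KS2: "K \<subseteq> S2" using S2_def by simp
    show "x\<in>S2 \<and> y \<in> S2 \<and> z \<in> S2" using Tmem[OF h] gs eS2 KS2 by blast
  qed
  have Tcl: "\<forall>x y z. (x,y,z)\<in>T \<longrightarrow> (\<iota>' x, z, y) \<in> T \<and> (z, \<iota>' y, x) \<in> T"
  proof (intro allI impI)
    fix x y z assume h: "(x,y,z) \<in> T"
    then consider (g) a b c where "(a,b,c) \<in> G" "(x,y,z) \<in> orb \<iota>' a b c"
      | (u) u where "u \<in> K" "(x,y,z) \<in> orb \<iota>' e u u"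
      unfolding T_def by fastforce
    then show "(\<iota>' x, z, y) \<in> T \<and> (z, \<iota>' y, x) \<in> T"
    proof cases
      case g
      have "(\<iota>' x, z, y) \<in> orb \<iota>' a b c \<and> (z, \<iota>' y, x) \<in> orb \<iota>' a b c"
        using orb_cl[OF ii' ii' ii' g(2)] .
      moreover have "orb \<iota>' a b c \<subseteq> T" unfolding T_def using g(1) by fastforce
      ultimately show ?thesis by blast
    next
      case u
      have "(\<iota>' x, z, y) \<in> orb \<iota>' e u u \<and> (z, \<iota>' y, x) \<in> orb \<iota>' e u u"
        using orb_cl[OF ii' ii' ii' u(2)] .
      moreover have "orb \<iota>' e u u \<subseteq> T" unfolding T_def using u(1) by blast
      ultimately show ?thesis by blast
    qed
  qed
  have Tdisj: "\<forall>x y z. (x,y,z)\<in>T \<longrightarrow> x\<in>S \<longrightarrow> y\<in>S \<longrightarrow> m x y = None"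
  proof (intro allI impI)
    fix x y z assume h: "(x,y,z) \<in> T" and xy: "x \<in> S" "y \<in> S"
    have gcase: "m x y = None" if abc: "(a,b,c) \<in> G" and
      o: "(x,y,z) = (a,b,c) \<or> (x,y,z) = (a,c,b) \<or> (x,y,z) = (c,\<iota>' b,a) \<or>
      (x,y,z) = (c,a,\<iota>' b) \<or> (x,y,z) = (b,c,a) \<or> (x,y,z) = (\<iota>' b,a,c)" for a b c
    proof -
      note C = Gcases[OF abc]
      have bN: "b \<in> Np" using C by blast
      have bS: "b \<in> S" using bN NpS by blast
      have ib: "\<iota>' b = \<iota> b" using iNp[OF bN] .
      have c1: False if "a \<in> K" "c \<in> K"
        using o that xy KS by auto
      have c2: "m x y = None" if d: "d \<in> D b" "a = \<nu> (sp b d)" "c = g b d" for d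
      proof -
        have aK: "a \<in> K" using d(2) nuK spb[OF bS DS[OF bN d(1)]] by simp
        have gr: "g b d \<in> R b" using gR[OF bN d(1)] .
        note RF = Rfacts[OF bN gr]
        have "x \<noteq> a" "y \<noteq> a" using aK xy KS by auto
        then have "(x,y) = (c, \<iota> b) \<or> (x,y) = (b,c)" using o ib by auto
        moreover have "m c (\<iota> b) = None" using RF d(3) by simp
        moreover have "m b c = None"
        proof (rule ccontr)
          assume "m b c \<noteq> None"
          then have "m (pinv S m e c) (pinv S m e b) \<noteq> None" using pil_dom_sym[OF pil bS] RF d(3) by simp
          then show False using RF d(3) \<iota>_def by simp
        qed
        ultimately show ?thesis by auto
      qed
      have c3: "m x y = None" if d: "d \<in> D b" "a = d" "c = \<nu> (sp b d + \<sigma> b)" for d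
      proof -
        have cK: "c \<in> K" using d(3) nuK spb[OF bS DS[OF bN d(1)]] by simp
        note DF = Dfacts[OF bN d(1)]
        have "x \<noteq> c" "y \<noteq> c" using cK xy KS by auto
        then have "(x,y) = (a, b) \<or> (x,y) = (\<iota> b, a)" using o ib by auto
        moreover have "m a b = None" using DF d(2) by simp
        moreover have "m (\<iota> b) a = None"
        proof (rule ccontr)
          assume "m (\<iota> b) a \<noteq> None"
          then have "m (pinv S m e a) (pinv S m e (\<iota> b)) \<noteq> None"
            using pil_dom_sym[OF pil iS[OF bS]] DF d(2) by simp
          then show False using DF d(2) \<iota>_def ii[OF bS] by simp
        qed
        ultimately show ?thesis by auto
      qed
      have k1: ?thesis if "k < n" "a = \<nu> k" "c = \<nu> ((k + \<sigma> b) mod n)" for k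
      proof -
        have "a \<in> K" "c \<in> K" using that nuK npos by auto
        then show ?thesis using c1 by blast
      qed
      show ?thesis using C k1 c2 c3 by blast
    qed
    have ucase: False if "u \<in> K" "(x,y,z) = (e,u,u) \<or> (x,y,z) = (u,u,e) \<or> (x,y,z) = (u,e,u)" for u
      using that xy KS by auto
    from Tmem[OF h] show "m x y = None"
    proof
      assume "\<exists>a b c. (a,b,c)\<in>G \<and> ((x,y,z) = (a,b,c) \<or> (x,y,z) = (a,c,b) \<or> (x,y,z) = (c,\<iota>' b,a) \<or>
      (x,y,z) = (c,a,\<iota>' b) \<or> (x,y,z) = (b,c,a) \<or> (x,y,z) = (\<iota>' b,a,c))"
      then obtain a b c where "(a,b,c)\<in>G" "(x,y,z) = (a,b,c) \<or> (x,y,z) = (a,c,b) \<or> (x,y,z) = (c,\<iota>' b,a) \<or>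
      (x,y,z) = (c,a,\<iota>' b) \<or> (x,y,z) = (b,c,a) \<or> (x,y,z) = (\<iota>' b,a,c)" by blast
      then show ?thesis by (rule gcase)
    next
      assume "\<exists>u\<in>K. (x,y,z) = (e,u,u) \<or> (x,y,z) = (u,u,e) \<or> (x,y,z) = (u,e,u)"
      then obtain u where "u \<in> K" "(x,y,z) = (e,u,u) \<or> (x,y,z) = (u,u,e) \<or> (x,y,z) = (u,e,u)" by blast
      then show ?thesis using ucase by blast
    qed
  qed
  have Tunit: "\<forall>u\<in>S2-S. (e,u,u) \<in> T" using KT S2_def by auto
  have E: "partial_ip_loop S2 m' e \<and> (\<forall>x\<in>S2. pinv S2 m' e x = \<iota>' x)
     \<and> (\<forall>x\<in>S. \<forall>y\<in>S. m x y \<noteq> None \<longrightarrow> m' x y = m x y)"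
    unfolding m'_def
    by (rule ext_pil[OF pil _ i1 i2 i3 Tsub Tcl Tfun Tdisj Tunit]) (simp add: S2_def)
  have pil2: "partial_ip_loop S2 m' e" using E by blast
  have agree: "\<forall>x\<in>S. \<forall>y\<in>S. m x y \<noteq> None \<longrightarrow> m' x y = m x y" using E by blast
  note P2 = pil_props[OF pil2]
  have TS: "\<And>x y z. (x,y,z) \<in> T \<Longrightarrow> m' x y = Some z" unfolding m'_def using ext_T[OF Tfun] by blast
  have Kinv: "\<And>x. x \<in> K \<Longrightarrow> m' x x = Some e" using KT TS by blast
  have o3: "O3 S2 m' e = O3 S m e"
  proof (rule o3_ext[OF pil pil2])
    show "S \<subseteq> S2" using S2_def by simp
    show "\<forall>x\<in>S. \<forall>y\<in>S. m x y \<noteq> None \<longrightarrow> m' x y = m x y" using agree .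
    show "\<forall>x\<in>S2 - S. m' x x = Some e" using Kinv S2_def by blast
    show "\<forall>x\<in>S. m x x = None \<longrightarrow> m' x x \<noteq> Some (pinv S m e x)"
    proof (intro ballI impI)
      fix x assume x: "x \<in> S" "m x x = None"
      have False
      proof (cases "\<iota> x = x")
        case True
        then show False using inv1[OF x(1)] x(2) by simp
      next
        case False
        then have "x \<noteq> pinv S m e x" using \<iota>_def by auto
        then have "m x x = Some e" using hyp x by blast
        then show False using x(2) by simp
      qed
      then show "m' x x \<noteq> Some (pinv S m e x)" by blast
    qed
  qed
  have domG: "\<And>y a. y \<in> Np \<Longrightarrow> a \<in> K \<or> a \<in> D y \<Longrightarrow> \<exists>c. (a,y,c) \<in> G"
  proof -
    fix y a assume y: "y \<in> Np" and a: "a \<in> K \<or> a \<in> D y"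
    show "\<exists>c. (a,y,c) \<in> G"
    proof (cases "a \<in> D y")
      case True
      then have "(a, y, \<nu> (sp y a + \<sigma> y)) \<in> G" unfolding G_def G3_def using y by blast
      then show ?thesis by blast
    next
      case False
      then have "a \<in> K" using a by blast
      then obtain k where k: "k < n" "a = \<nu> k" unfolding K_def by blast
      show ?thesis
      proof (cases "k \<in> sp y ` D y")
        case True
        then obtain d where d: "d \<in> D y" "k = sp y d" by blast
        then have "(a, y, g y d) \<in> G" unfolding G_def G2_def using y k by blast
        then show ?thesis by blast
      next
        case False
        then have "(a, y, \<nu> ((k + \<sigma> y) mod n)) \<in> G" unfolding G_def G1_def using y k by blast
        then show ?thesis by blast
      qed
    qed
  qed
  have imgG: "\<And>y c. y \<in> Np \<Longrightarrow> c \<in> K \<or> c \<in> R y \<Longrightarrow> \<exists>a. (a,y,c) \<in> G"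
  proof -
    fix y c assume y: "y \<in> Np" and c: "c \<in> K \<or> c \<in> R y"
    have yS: "y \<in> S" using y NpS by blast
    show "\<exists>a. (a,y,c) \<in> G"
    proof (cases "c \<in> R y")
      case True
      then obtain d where d: "d \<in> D y" "c = g y d" using gsurj[OF y] by blast
      then have "(\<nu> (sp y d), y, c) \<in> G" unfolding G_def G2_def using y by blast
      then show ?thesis by blast
    next
      case False
      then have "c \<in> K" using c by blast
      then obtain k where k: "k < n" "c = \<nu> k" unfolding K_def by blast
      show ?thesis
      proof (cases "\<exists>d\<in>D y. k = sp y d + \<sigma> y")
        case True
        then obtain d where d: "d \<in> D y" "k = sp y d + \<sigma> y" by blast
        then have "(d, y, c) \<in> G" unfolding G_def G3_def using y k by blast
        then show ?thesis by blast
      next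
        case False
        define k0 where "k0 = (k + n - \<sigma> y) mod n"
        have sy: "\<sigma> y < n" using \<sigma>b[OF yS] n2M by auto
        have k0: "(k0 + \<sigma> y) mod n = k" "k0 < n" using L9[OF k(1) sy] k0_def by auto
        have "k0 \<notin> sp y ` D y"
        proof
          assume "k0 \<in> sp y ` D y"
          then obtain d where d: "d \<in> D y" "k0 = sp y d" by blast
          have "sp y d + \<sigma> y < n" using spb[OF yS DS[OF y d(1)]] .
          then have "(k0 + \<sigma> y) mod n = sp y d + \<sigma> y" using d(2) by simp
          then have "k = sp y d + \<sigma> y" using k0(1) by simp
          then show False using False d(1) by blast
        qed
        then have "(\<nu> k0, y, \<nu> ((k0 + \<sigma> y) mod n)) \<in> G" unfolding G_def G1_def using y k0(2) by blast
        then have "(\<nu> k0, y, c) \<in> G" using k0(1) k(2) by simp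
        then show ?thesis by blast
      qed
    qed
  qed
  have GTm: "\<And>a b c. (a,b,c) \<in> G \<Longrightarrow> m' a b = Some c \<and> m' (c) (\<iota> b) = Some a \<and> m' b c = Some a \<and> m' (\<iota> b) a = Some c"
  proof -
    fix a b c assume abc: "(a,b,c) \<in> G"
    have "b \<in> Np" using GI[OF abc] by blast
    then have "\<iota>' b = \<iota> b" using iNp by blast
    then show "m' a b = Some c \<and> m' (c) (\<iota> b) = Some a \<and> m' b c = Some a \<and> m' (\<iota> b) a = Some c"
      using GT[OF abc] TS by metis
  qed
  have S2S: "\<And>x. x \<in> S2 \<Longrightarrow> x \<in> S \<or> x \<in> K" using S2_def by blast
  have t2: "\<And>y u. y \<in> Np \<Longrightarrow> u \<in> S2 \<Longrightarrow> m' u y \<noteq> None"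
  proof -
    fix y u assume y: "y \<in> Np" and u: "u \<in> S2"
    have yS: "y \<in> S" using y NpS by blast
    show "m' u y \<noteq> None"
    proof (cases "u \<in> S \<and> m u y \<noteq> None")
      case True then show ?thesis using agree yS by simp
    next
      case False
      then have "u \<in> K \<or> u \<in> D y" using S2S[OF u] D_def by auto
      then obtain c where "(u,y,c) \<in> G" using domG[OF y] by blast
      then show ?thesis using GTm by simp
    qed
  qed
  have t3: "\<And>y u. y \<in> Np \<Longrightarrow> u \<in> S2 \<Longrightarrow> m' u (\<iota> y) \<noteq> None"
  proof -
    fix y u assume y: "y \<in> Np" and u: "u \<in> S2"
    have yS: "\<iota> y \<in> S" using y NpS iS by blast
    show "m' u (\<iota> y) \<noteq> None"
    proof (cases "u \<in> S \<and> m u (\<iota> y) \<noteq> None")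
      case True then show ?thesis using agree yS by simp
    next
      case False
      then have "u \<in> K \<or> u \<in> R y" using S2S[OF u] R_def by auto
      then obtain a where "(a,y,u) \<in> G" using imgG[OF y] by blast
      then show ?thesis using GTm by simp
    qed
  qed
  have t4: "\<And>y w. y \<in> Np \<Longrightarrow> w \<in> S2 \<Longrightarrow> m' y w \<noteq> None"
  proof -
    fix y w assume y: "y \<in> Np" and w: "w \<in> S2"
    have yS: "y \<in> S" using y NpS by blast
    show "m' y w \<noteq> None"
    proof (cases "w \<in> S \<and> m y w \<noteq> None")
      case True then show ?thesis using agree yS by simp
    next
      case False
      have "w \<in> K \<or> w \<in> R y"
      proof (cases "w \<in> S")
        case True
        then have myw: "m y w = None" using False by simp
        have iw: "\<iota> w \<in> S" "\<iota> y \<in> S" using True yS iS by auto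
        have "m (\<iota> w) (\<iota> y) = None"
        proof (rule ccontr)
          assume "m (\<iota> w) (\<iota> y) \<noteq> None"
          then have "m (pinv S m e (\<iota> y)) (pinv S m e (\<iota> w)) \<noteq> None" using pil_dom_sym[OF pil iw(1) iw(2)] by simp
          then show False using myw ii[OF yS] ii[OF True] \<iota>_def by simp
        qed
        then have "\<iota> w \<in> R y" using R_def iw by simp
        then have "\<iota> (\<iota> w) = \<iota> w" using Rfacts[OF y] by blast
        then have "\<iota> w = w" using ii[OF True] by simp
        then show ?thesis using \<open>\<iota> w \<in> R y\<close> by simp
      next
        case False then show ?thesis using S2S[OF w] by blast
      qed
      then obtain a where "(a,y,w) \<in> G" using imgG[OF y] by blast
      then show ?thesis using GTm by simp
    qed
  qed
  have t5: "\<And>y w. y \<in> Np \<Longrightarrow> w \<in> S2 \<Longrightarrow> m' (\<iota> y) w \<noteq> None"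
  proof -
    fix y w assume y: "y \<in> Np" and w: "w \<in> S2"
    have yS: "y \<in> S" "\<iota> y \<in> S" using y NpS iS by auto
    show "m' (\<iota> y) w \<noteq> None"
    proof (cases "w \<in> S \<and> m (\<iota> y) w \<noteq> None")
      case True then show ?thesis using agree yS by simp
    next
      case False
      have "w \<in> K \<or> w \<in> D y"
      proof (cases "w \<in> S")
        case True
        then have myw: "m (\<iota> y) w = None" using False by simp
        have iw: "\<iota> w \<in> S" using True iS by auto
        have "m (\<iota> w) y = None"
        proof (rule ccontr)
          assume "m (\<iota> w) y \<noteq> None"
          then have "m (pinv S m e y) (pinv S m e (\<iota> w)) \<noteq> None" using pil_dom_sym[OF pil iw yS(1)] by simp
          then show False using myw ii[OF True] \<iota>_def by simp
        qed
        then have "\<iota> w \<in> D y" using D_def iw by simp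
        then have "\<iota> (\<iota> w) = \<iota> w" using Dfacts[OF y] by blast
        then have "\<iota> w = w" using ii[OF True] by simp
        then show ?thesis using \<open>\<iota> w \<in> D y\<close> by simp
      next
        case False then show ?thesis using S2S[OF w] by blast
      qed
      then obtain c where "(w,y,c) \<in> G" using domG[OF y] by blast
      then show ?thesis using GTm by simp
    qed
  qed
  have catg: "\<And>x. x \<in> S2 \<Longrightarrow> x = e \<or> x \<in> Np \<or> (x \<in> S \<and> \<iota> x \<in> Np) \<or> x \<in> O2 S2 m' e"
  proof -
    fix x assume x: "x \<in> S2"
    show "x = e \<or> x \<in> Np \<or> (x \<in> S \<and> \<iota> x \<in> Np) \<or> x \<in> O2 S2 m' e"
    proof (cases "x \<in> S")
      case False
      then have xK: "x \<in> K" using S2S[OF x] by blast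
      then have "x \<noteq> e" using KS eS by auto
      then show ?thesis using Kinv[OF xK] x unfolding O2_def by simp
    next
      case True
      show ?thesis
      proof (cases "\<iota> x = x")
        case True2: True
        show ?thesis
        proof (cases "x = e")
          case False
          have "m x x = Some e" using inv1[OF True] True2 by simp
          then have "m' x x = Some e" using agree True by simp
          then show ?thesis using False x unfolding O2_def by simp
        qed simp
      next
        case False
        have ixS: "\<iota> x \<in> S" using iS True by blast
        have "\<phi> x \<noteq> \<phi> (\<iota> x)" using \<phi>(1) True ixS False by (metis inj_on_eq_iff)
        then consider "\<phi> x < \<phi> (\<iota> x)" | "\<phi> (\<iota> x) < \<phi> x" by linarith
        then show ?thesis
        proof cases
          case 1 then have "x \<in> Np" using Np_def True False by auto
          then show ?thesis by simp
        next
          case 2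
          then have "\<phi> (\<iota> x) < \<phi> (\<iota> (\<iota> x))" using ii[OF True] by simp
          moreover have "\<iota> x \<noteq> \<iota> (\<iota> x)" using ii[OF True] False by simp
          ultimately have "\<iota> x \<in> Np" using Np_def ixS by auto
          then show ?thesis using True by simp
        qed
      qed
    qed
  qed
  have gp: "gaps S2 m' \<subseteq> O2 S2 m' e \<times> O2 S2 m' e"
  proof
    fix p assume p: "p \<in> gaps S2 m'"
    then obtain u w where uw: "p = (u,w)" "u \<in> S2" "w \<in> S2" "m' u w = None"
      unfolding gaps_def pdom_def by auto
    have u: "u \<in> O2 S2 m' e"
    proof -
      have "u \<noteq> e" using P2(4) uw by auto
      moreover have "u \<notin> Np" using t4 uw by blast
      moreover have "\<not> (u \<in> S \<and> \<iota> u \<in> Np)"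
      proof
        assume h: "u \<in> S \<and> \<iota> u \<in> Np"
        then have "m' (\<iota> (\<iota> u)) w \<noteq> None" using t5 uw by blast
        then show False using ii h uw by simp
      qed
      ultimately show ?thesis using catg[OF uw(2)] by blast
    qed
    have w: "w \<in> O2 S2 m' e"
    proof -
      have "w \<noteq> e" using P2(4) uw by auto
      moreover have "w \<notin> Np" using t2 uw by blast
      moreover have "\<not> (w \<in> S \<and> \<iota> w \<in> Np)"
      proof
        assume h: "w \<in> S \<and> \<iota> w \<in> Np"
        then have "m' u (\<iota> (\<iota> w)) \<noteq> None" using t3 uw by blast
        then show False using ii h uw by simp
      qed
      ultimately show ?thesis using catg[OF uw(3)] by blast
    qed
    show "p \<in> O2 S2 m' e \<times> O2 S2 m' e" using u w uw by simp
  qed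
  show ?thesis
    apply (rule exI[of _ m'])
    using pil2 agree o3 gp unfolding S2_def K_def by blast
qed


definition liftm :: "('a \<Rightarrow> 'a \<Rightarrow> 'a option) \<Rightarrow> ('a + nat) \<Rightarrow> ('a + nat) \<Rightarrow> ('a + nat) option" where
  "liftm mul a b = (case a of Inl x \<Rightarrow> (case b of Inl y \<Rightarrow> map_option Inl (mul x y) | Inr _ \<Rightarrow> None) | Inr _ \<Rightarrow> None)"

lemma liftm_Inl: "liftm mul (Inl x) (Inl y) = map_option Inl (mul x y)"
  unfolding liftm_def by simp

lemma lift_pil:
  assumes pil: "partial_ip_loop P mul e"
  shows "partial_ip_loop (Inl ` P) (liftm mul) (Inl e)"
    "O3 (Inl ` P) (liftm mul) (Inl e) = Inl ` O3 P mul e"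
proof -
  note A = pil_props[OF pil]
  define \<iota> where "\<iota> a = (case a of Inl x \<Rightarrow> Inl (pinv P mul e x) | Inr k \<Rightarrow> Inr k)" for a :: "'a + nat"
  have iL: "\<iota> (Inl x) = Inl (pinv P mul e x)" for x unfolding \<iota>_def by simp
  have "partial_ip_loop (Inl ` P) (liftm mul) (Inl e) \<and> (\<forall>x\<in>Inl ` P. pinv (Inl ` P) (liftm mul) (Inl e) x = \<iota> x)"
  proof (rule pil_intro)
    show "Inl e \<in> Inl ` P" using A(1) by simp
    show "\<forall>x\<in>Inl ` P. \<iota> x \<in> Inl ` P" using A(2) iL by auto
    show "\<forall>x\<in>Inl ` P. \<forall>y\<in>Inl ` P. \<forall>z. liftm mul x y = Some z \<longrightarrow> z \<in> Inl ` P"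
    proof (intro ballI allI impI)
      fix x y z assume h: "x \<in> Inl ` P" "y \<in> Inl ` P" "liftm mul x y = Some z"
      then obtain a b where ab: "x = Inl a" "y = Inl b" "a \<in> P" "b \<in> P" by auto
      have "map_option Inl (mul a b) = Some z" using h(3) ab(1,2) by (simp add: liftm_Inl)
      then obtain c where c: "mul a b = Some c" "z = Inl c" by auto
      then show "z \<in> Inl ` P" using A(3) ab by blast
    qed
    show "\<forall>x\<in>Inl ` P. liftm mul (Inl e) x = Some x \<and> liftm mul x (Inl e) = Some x"
      using A(4) by (auto simp: liftm_Inl)
    show "\<forall>x\<in>Inl ` P. liftm mul x (\<iota> x) = Some (Inl e) \<and> liftm mul (\<iota> x) x = Some (Inl e)"
      using A(5) iL by (auto simp: liftm_Inl)
    show "\<forall>x\<in>Inl ` P. \<forall>y\<in>Inl ` P. \<forall>z. liftm mul x y = Some z \<longrightarrow>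
        liftm mul (\<iota> x) z = Some y \<and> liftm mul z (\<iota> y) = Some x"
    proof (intro ballI allI impI)
      fix x y z assume h: "x \<in> Inl ` P" "y \<in> Inl ` P" "liftm mul x y = Some z"
      then obtain a b where ab: "x = Inl a" "y = Inl b" "a \<in> P" "b \<in> P" by auto
      have "map_option Inl (mul a b) = Some z" using h(3) ab(1,2) by (simp add: liftm_Inl)
      then obtain c where c: "mul a b = Some c" "z = Inl c" by auto
      have "mul (pinv P mul e a) c = Some b" "mul c (pinv P mul e b) = Some a"
        using A(6)[rule_format, OF ab(3) ab(4) c(1)] by auto
      then show "liftm mul (\<iota> x) z = Some y \<and> liftm mul z (\<iota> y) = Some x"
        using ab c iL by (simp add: liftm_Inl)
    qed
  qed
  then show "partial_ip_loop (Inl ` P) (liftm mul) (Inl e)" by blast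
  show "O3 (Inl ` P) (liftm mul) (Inl e) = Inl ` O3 P mul e"
  proof
    show "O3 (Inl ` P) (liftm mul) (Inl e) \<subseteq> Inl ` O3 P mul e"
    proof
      fix x assume "x \<in> O3 (Inl ` P) (liftm mul) (Inl e)"
      then obtain z where x: "x \<in> Inl ` P" "x \<noteq> Inl e" "liftm mul x x = Some z" "liftm mul x z = Some (Inl e)"
        unfolding O3_def by blast
      then obtain a where a: "x = Inl a" "a \<in> P" by auto
      have "map_option Inl (mul a a) = Some z" using x(3) a(1) by (simp add: liftm_Inl)
      then obtain c where c: "mul a a = Some c" "z = Inl c" by auto
      have "map_option Inl (mul a c) = Some (Inl e)" using x(4) a(1) c(2) by (simp add: liftm_Inl)
      then have "mul a c = Some e" by auto
      then have "a \<in> O3 P mul e" unfolding O3_def using a x(2) c by auto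
      then show "x \<in> Inl ` O3 P mul e" using a by simp
    qed
    show "Inl ` O3 P mul e \<subseteq> O3 (Inl ` P) (liftm mul) (Inl e)"
    proof
      fix x :: "'a + nat" assume "x \<in> Inl ` O3 P mul e"
      then obtain a z where a: "x = Inl a" "a \<in> P" "a \<noteq> e" "mul a a = Some z" "mul a z = Some e"
        unfolding O3_def by blast
      have "liftm mul x x = Some (Inl z)" "liftm mul x (Inl z) = Some (Inl e)" using a by (simp_all add: liftm_Inl)
      then show "x \<in> O3 (Inl ` P) (liftm mul) (Inl e)" unfolding O3_def using a by auto
    qed
  qed
qed

theorem proposition2:
  fixes P :: "'a set" and mul :: "'a \<Rightarrow> 'a \<Rightarrow> 'a option" and e :: 'a
  assumes "partial_ip_loop P mul e" and "finite P" and "3 dvd o3 P mul e"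
  shows "\<exists>(Q :: ('a + nat) set) mulQ.
           partial_ip_loop Q mulQ (Inl e) \<and> finite Q \<and>
           extends_along Inl P mul Q mulQ \<and>
           3 dvd o3 Q mulQ (Inl e) \<and>
           card Q \<ge> 10 \<and> card Q mod 6 = 4 \<and>
           gaps Q mulQ \<subseteq> O2 Q mulQ (Inl e) \<times> O2 Q mulQ (Inl e)"
proof -
  define S :: "('a + nat) set" where "S = Inl ` P"
  define mL where "mL = liftm mul"
  have pilL: "partial_ip_loop S mL (Inl e)" unfolding S_def mL_def using lift_pil(1)[OF assms(1)] .
  have o3L: "O3 S mL (Inl e) = Inl ` O3 P mul e" unfolding S_def mL_def using lift_pil(2)[OF assms(1)] .
  have finS: "finite S" unfolding S_def using assms(2) by simp
  have inf: "infinite (UNIV :: ('a + nat) set)"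
  proof
    assume "finite (UNIV :: ('a + nat) set)"
    then have "finite (range (Inr :: nat \<Rightarrow> 'a + nat))" by (rule finite_subset[OF subset_UNIV])
    then have "finite (UNIV :: nat set)" by (rule finite_imageD) simp
    then show False by simp
  qed
  have "\<exists>S' m'. partial_ip_loop S' m' (Inl e) \<and> finite S' \<and> S \<subseteq> S' \<and>
     (\<forall>x\<in>S. \<forall>y\<in>S. mL x y \<noteq> None \<longrightarrow> m' x y = mL x y) \<and>
     (\<forall>x\<in>S'-S. x \<noteq> Inl e \<and> m' x x = Some (Inl e)) \<and> (\<forall>x\<in>S. \<forall>y\<in>S. m' x y \<noteq> None) \<and>
     O3 S' m' (Inl e) = O3 S mL (Inl e)"
    apply (rule stage1[OF inf pilL finS])
     apply (rule subset_refl)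
    apply simp
    done
  then obtain S1 m1 where st1: "partial_ip_loop S1 m1 (Inl e) \<and> finite S1 \<and> S \<subseteq> S1 \<and>
     (\<forall>x\<in>S. \<forall>y\<in>S. mL x y \<noteq> None \<longrightarrow> m1 x y = mL x y) \<and>
     (\<forall>x\<in>S1-S. x \<noteq> Inl e \<and> m1 x x = Some (Inl e)) \<and> (\<forall>x\<in>S. \<forall>y\<in>S. m1 x y \<noteq> None) \<and>
     O3 S1 m1 (Inl e) = O3 S mL (Inl e)" by (elim exE)
  have pil1: "partial_ip_loop S1 m1 (Inl e)" and fin1: "finite S1" and SS1: "S \<subseteq> S1"
    and ag1: "\<forall>x\<in>S. \<forall>y\<in>S. mL x y \<noteq> None \<longrightarrow> m1 x y = mL x y"
    and inv1: "\<forall>x\<in>S1-S. x \<noteq> Inl e \<and> m1 x x = Some (Inl e)"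
    and full1: "\<forall>x\<in>S. \<forall>y\<in>S. m1 x y \<noteq> None"
    and o31: "O3 S1 m1 (Inl e) = O3 S mL (Inl e)"
    using st1 by blast+
  note P1 = pil_props[OF pil1]
  have hyp: "\<forall>x\<in>S1. \<forall>y\<in>S1. m1 x y = None \<longrightarrow> y \<noteq> pinv S1 m1 (Inl e) y \<longrightarrow> (x \<noteq> Inl e \<and> m1 x x = Some (Inl e))"
  proof (intro ballI impI)
    fix x y assume xy: "x \<in> S1" "y \<in> S1" "m1 x y = None" "y \<noteq> pinv S1 m1 (Inl e) y"
    have yS: "y \<in> S"
    proof (rule ccontr)
      assume "y \<notin> S"
      then have "m1 y y = Some (Inl e)" using inv1 xy(2) by blast
      then have "y = pinv S1 m1 (Inl e) y" using P1(9) xy(2) by blast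
      then show False using xy(4) by simp
    qed
    have "x \<notin> S" using full1 yS xy(3) by blast
    then show "x \<noteq> Inl e \<and> m1 x x = Some (Inl e)" using inv1 xy(1) by blast
  qed
  have "infinite (UNIV - S1)" using inf fin1 by (simp add: Diff_infinite_finite)
  then obtain \<nu> :: "nat \<Rightarrow> 'a + nat" where nu0: "inj \<nu>" "range \<nu> \<subseteq> UNIV - S1"
    using infinite_countable_subset by blast
  have nu: "inj \<nu>" "\<forall>k. \<nu> k \<notin> S1" using nu0 by auto
  define c where "c = card S1"
  define n0 where "n0 = 2 * (c + 1) * c * c"
  define n where "n = 6 * n0 + 5 * c + 16"
  have nbig: "2 * (card S1 + 1) * card S1 * card S1 \<le> n" unfolding n_def n0_def c_def by simp
  have cn: "(c + n) mod 6 = 4" "c + n \<ge> 10"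
  proof -
    have "c + n = 6 * (n0 + c + 2) + 4" unfolding n_def by simp
    then show "(c + n) mod 6 = 4" by simp
    show "c + n \<ge> 10" unfolding n_def by simp
  qed
  obtain m' where st2: "partial_ip_loop (S1 \<union> \<nu> ` {..<n}) m' (Inl e) \<and>
     (\<forall>x\<in>S1. \<forall>y\<in>S1. m1 x y \<noteq> None \<longrightarrow> m' x y = m1 x y) \<and>
     O3 (S1 \<union> \<nu> ` {..<n}) m' (Inl e) = O3 S1 m1 (Inl e) \<and>
     gaps (S1 \<union> \<nu> ` {..<n}) m' \<subseteq> O2 (S1 \<union> \<nu> ` {..<n}) m' (Inl e) \<times> O2 (S1 \<union> \<nu> ` {..<n}) m' (Inl e)"
    using stage2[OF pil1 fin1 hyp nu nbig] by (elim exE)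
  define Q where "Q = S1 \<union> \<nu> ` {..<n}"
  have pilQ: "partial_ip_loop Q m' (Inl e)" and ag2: "\<forall>x\<in>S1. \<forall>y\<in>S1. m1 x y \<noteq> None \<longrightarrow> m' x y = m1 x y"
    and o3Q: "O3 Q m' (Inl e) = O3 S1 m1 (Inl e)"
    and gQ: "gaps Q m' \<subseteq> O2 Q m' (Inl e) \<times> O2 Q m' (Inl e)"
    using st2 unfolding Q_def by blast+
  have finQ: "finite Q" unfolding Q_def using fin1 by simp
  have cardQ: "card Q = c + n"
  proof -
    have "S1 \<inter> \<nu> ` {..<n} = {}" using nu by auto
    then have "card Q = card S1 + card (\<nu> ` {..<n})" unfolding Q_def using fin1 by (simp add: card_Un_disjoint)
    moreover have "card (\<nu> ` {..<n}) = n" using nu(1) by (simp add: card_image inj_on_subset)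
    ultimately show ?thesis using c_def by simp
  qed
  have ext: "extends_along Inl P mul Q m'"
    unfolding extends_along_def
  proof (intro conjI ballI allI impI)
    show "inj_on Inl P" by simp
    show "Inl ` P \<subseteq> Q" using SS1 unfolding Q_def S_def by blast
    fix x y z assume xy: "x \<in> P" "y \<in> P" "mul x y = Some z"
    have xyS: "Inl x \<in> S" "Inl y \<in> S" unfolding S_def using xy by auto
    have 1: "mL (Inl x) (Inl y) = Some (Inl z)" unfolding mL_def using xy(3) by (simp add: liftm_Inl)
    have 2: "m1 (Inl x) (Inl y) = Some (Inl z)" using ag1 xyS 1 by simp
    have 3: "m' (Inl x) (Inl y) = m1 (Inl x) (Inl y)" using ag2 xyS SS1 2 by blast
    show "m' (Inl x) (Inl y) = Some (Inl z)" using 2 3 by simp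
  qed
  have "o3 Q m' (Inl e) = o3 P mul e"
  proof -
    have "o3 Q m' (Inl e) = card ((Inl :: 'a \<Rightarrow> 'a + nat) ` O3 P mul e)" unfolding o3_def using o3Q o31 o3L by simp
    also have "\<dots> = o3 P mul e" unfolding o3_def by (simp add: card_image)
    finally show ?thesis .
  qed
  then have "3 dvd o3 Q m' (Inl e)" using assms(3) by simp
  then show ?thesis
    apply (intro exI[of _ Q] exI[of _ m'] conjI)
    using pilQ finQ ext cardQ cn gQ by simp_all
qed

end
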